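(* Let $m,n\in\mathbb{N}$, $0<\ell\le\infty$, let $J$ be an $m\times m$ matrix with $J^*=-J$, and $H_1(x)=H_1(x)^*$, $H_0(x)=H_0(x)^*$ be $m\times m$ matrix functions locally summable on $[0,\ell)$. Let $A$, $S(0)=S(0)^*$ be $n\times n$ and $\Pi(0)$ be $n\times m$ matrices with $AS(0)-S(0)A^*=\Pi(0)J\Pi(0)^*$, and define $\Pi(x),S(x)$ by $\Pi'=-A\Pi JH_1-\Pi JH_0$, $S'=\Pi JH_1J^*\Pi^*$. Then for every $h\in\mathbb{C}^n$ the vector function $$\widetilde z(x,t)=J\Pi(x)^*S(x)^{-1}\mathrm{e}^{-tA}h$$ satisfies, at points of invertibility of $S(x)$, $$\frac{\partial}{\partial x}\widetilde z(x,t)=J\Big(-H_1(x)\frac{\partial}{\partial t}\widetilde z(x,t)+\widetilde H_0(x)\widetilde z(x,t)\Big),$$ where $\widetilde H_0=H_0-X^*H_1-H_1X$ and $X=J\Pi^*S^{-1}\Pi$.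
   Context: This is the GBDT-transformed version of the dynamical system $\partial_xz=J(-H_1\partial_tz+H_0z)$. *)

theory Defs
  imports "HOL-Analysis.Analysis"
begin

definition cadj :: "complex^'n^'m \<Rightarrow> complex^'m^'n" where
  "cadj M = (\<chi> i j. cnj (M $ j $ i))"

definition mpow :: "complex^'n^'n \<Rightarrow> nat \<Rightarrow> complex^'n^'n" where
  "mpow A k = (((**) A) ^^ k) (mat 1)"

definition mexp :: "complex^'n^'n \<Rightarrow> complex^'n^'n" where
  "mexp A = (\<Sum>k. (1 / fact k) *\<^sub>R mpow A k)"

end

theory Submission
  imports Defs
begin


lemma mi_both:
  assumes "invertible (A::'a::semiring_1^'n^'n)"
  shows "A ** matrix_inv A = mat 1" "matrix_inv A ** A = mat 1"
proof -
  have "\<exists>A'. A ** A' = mat 1 \<and> A' ** A = mat 1" using assms unfolding invertible_def .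
  then have "A ** matrix_inv A = mat 1 \<and> matrix_inv A ** A = mat 1"
    unfolding matrix_inv_def by (rule someI_ex)
  then show "A ** matrix_inv A = mat 1" "matrix_inv A ** A = mat 1" by auto
qed

lemma bilinear_mm: "bilinear (\<lambda>(A::complex^'n^'m) (B::complex^'k^'n). A ** B)"
  unfolding bilinear_def linear_iff
  by (auto simp: matrix_add_ldistrib vec_eq_iff matrix_matrix_mult_def sum_distrib_left
      vector_scaleR_component scaleR_sum_right algebra_simps sum.distrib)

lemma bilinear_mv: "bilinear (\<lambda>(A::complex^'n^'m) (v::complex^'n). A *v v)"
  unfolding bilinear_def linear_iff
  by (auto simp: vec_eq_iff matrix_vector_mult_def sum_distrib_left
      vector_scaleR_component scaleR_sum_right algebra_simps sum.distrib)

lemma bb_mm: "bounded_bilinear (\<lambda>(A::complex^'n^'m) (B::complex^'k^'n). A ** B)"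
  using bilinear_mm bilinear_conv_bounded_bilinear by blast

lemma bb_mv: "bounded_bilinear (\<lambda>(A::complex^'n^'m) (v::complex^'n). A *v v)"
  using bilinear_mv bilinear_conv_bounded_bilinear by blast

lemma cadj_mult: "cadj ((A::complex^'n^'m) ** (B::complex^'k^'n)) = cadj B ** cadj A"
  by (simp add: cadj_def vec_eq_iff matrix_matrix_mult_def mult.commute)

lemma cadj_add: "cadj ((A::complex^'n^'m) + B) = cadj A + cadj B"
  by (simp add: cadj_def vec_eq_iff)
lemma cadj_diff: "cadj ((A::complex^'n^'m) - B) = cadj A - cadj B"
  by (simp add: cadj_def vec_eq_iff)
lemma cadj_uminus: "cadj (- (A::complex^'n^'m)) = - cadj A"
  by (simp add: cadj_def vec_eq_iff)
lemma cadj_cadj: "cadj (cadj (A::complex^'n^'m)) = A"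
  by (simp add: cadj_def vec_eq_iff)
lemma cadj_scaleR: "cadj (c *\<^sub>R (A::complex^'n^'m)) = c *\<^sub>R cadj A"
  by (simp add: cadj_def vec_eq_iff vector_scaleR_component)
lemma cadj_mat1: "cadj (mat 1 :: complex^'n^'n) = mat 1"
  by (simp add: cadj_def vec_eq_iff mat_def)
lemma bounded_linear_cadj: "bounded_linear (cadj :: complex^'n^'m \<Rightarrow> complex^'m^'n)"
  by (simp add: linear_conv_bounded_linear[symmetric] linear_iff cadj_add cadj_scaleR)

lemma cadj_inv:
  assumes "invertible (S::complex^'n^'n)" "cadj S = S"
  shows "cadj (matrix_inv S) = matrix_inv S"
proof -
  have "cadj (matrix_inv S) ** S = mat 1"
    using arg_cong[OF mi_both(1)[OF assms(1)], of cadj] assms(2) by (simp add: cadj_mult cadj_mat1)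
  then have "cadj (matrix_inv S) ** (S ** matrix_inv S) = matrix_inv S"
    by (simp add: matrix_mul_assoc)
  then show ?thesis using mi_both(1)[OF assms(1)] by simp
qed




lemma mm_uminus_left: "(- (A::'a::ring_1^'n^'m)) ** B = - (A ** B)"
  by (simp add: vec_eq_iff matrix_matrix_mult_def sum_negf)
lemma mm_uminus_right: "(A::'a::ring_1^'n^'m) ** (- B) = - (A ** B)"
  by (simp add: vec_eq_iff matrix_matrix_mult_def sum_negf)
lemma mm_diff_left: "((A::'a::ring_1^'n^'m) - B) ** C = A ** C - B ** C"
  by (simp add: vec_eq_iff matrix_matrix_mult_def sum_subtractf algebra_simps)
lemma mm_diff_right: "(A::'a::ring_1^'n^'m) ** (B - C) = A ** B - A ** C"
  by (simp add: vec_eq_iff matrix_matrix_mult_def sum_subtractf algebra_simps)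
lemma mm_add_left: "((A::'a::ring_1^'n^'m) + B) ** C = A ** C + B ** C"
  by (simp add: vec_eq_iff matrix_matrix_mult_def sum.distrib algebra_simps)
lemma mv_uminus_left: "(- (A::'a::ring_1^'n^'m)) *v v = - (A *v v)"
  by (simp add: vec_eq_iff matrix_vector_mult_def sum_negf)

lemma hvd_quot_iff:
  fixes f :: "real \<Rightarrow> 'a::real_normed_vector"
  shows "(f has_vector_derivative D) (at x) \<longleftrightarrow> ((\<lambda>y. (f y - f x) /\<^sub>R (y - x)) \<longlongrightarrow> D) (at x)"
proof -
  have e: "\<forall>\<^sub>F y in at x. norm (f y - f x - (y - x) *\<^sub>R D) / norm (y - x) = norm ((f y - f x) /\<^sub>R (y - x) - D)"
  proof (rule eventually_mono[OF eventually_neq_at_within[of x x UNIV]])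
    fix y assume "y \<noteq> x"
    then have aux: "(1 / (y - x)) *\<^sub>R ((y - x) *\<^sub>R D) = D" by simp
    have "(f y - f x) /\<^sub>R (y - x) - D = (1 / (y - x)) *\<^sub>R (f y - f x - (y - x) *\<^sub>R D)"
      by (simp only: scaleR_diff_right aux) (simp add: divide_inverse)
    then show "norm (f y - f x - (y - x) *\<^sub>R D) / norm (y - x) = norm ((f y - f x) /\<^sub>R (y - x) - D)"
      by (simp add: divide_simps)
  qed
  have "(f has_vector_derivative D) (at x) \<longleftrightarrow> ((\<lambda>y. norm (f y - f x - (y - x) *\<^sub>R D) / norm (y - x)) \<longlongrightarrow> 0) (at x)"
    unfolding has_vector_derivative_def has_derivative_iff_norm by (simp add: bounded_linear_scaleR_left)
  also have "\<dots> \<longleftrightarrow> ((\<lambda>y. norm ((f y - f x) /\<^sub>R (y - x) - D)) \<longlongrightarrow> 0) (at x)"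
    by (rule tendsto_cong[OF e])
  also have "\<dots> \<longleftrightarrow> ((\<lambda>y. (f y - f x) /\<^sub>R (y - x)) \<longlongrightarrow> D) (at x)"
    by (simp add: tendsto_norm_zero_iff LIM_zero_iff)
  finally show ?thesis .
qed

lemma inv_perturb:
  fixes M :: "complex^'n^'n"
  assumes "invertible M"
  shows "\<exists>d>0. \<exists>C. \<forall>\<Delta>. norm \<Delta> < d \<longrightarrow> invertible (M + \<Delta>) \<and>
           norm (matrix_inv (M + \<Delta>) - matrix_inv M) \<le> C * norm \<Delta>"
proof -
  obtain K1 where K1: "K1 > 0" "\<And>(a::complex^'n^'n) (b::complex^'n^'n). norm (a ** b) \<le> norm a * norm b * K1"
    using bounded_bilinear.pos_bounded[OF bb_mm] by blast
  obtain K2 where K2: "K2 > 0" "\<And>(a::complex^'n^'n) (b::complex^'n). norm (a *v b) \<le> norm a * norm b * K2"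
    using bounded_bilinear.pos_bounded[OF bb_mv] by blast
  define N where "N = matrix_inv M"
  have MN: "M ** N = mat 1" "N ** M = mat 1" using mi_both[OF assms] by (auto simp: N_def)
  define d where "d = 1 / (2 * (norm N + 1) * (K1\<^sup>2 + K2\<^sup>2))"
  have p1: "0 < norm N + 1" by (smt (verit) norm_ge_zero)
  have p2: "0 < K1\<^sup>2 + K2\<^sup>2" using K1 by (simp add: add_pos_nonneg)
  have "0 < (norm N + 1) * (K1\<^sup>2 + K2\<^sup>2)" using p1 p2 by simp
  note pos = this
  then have dpos: "d > 0" unfolding d_def by (metis divide_pos_pos mult.assoc zero_less_numeral zero_less_one mult_pos_pos)
  have main: "invertible (M + \<Delta>) \<and> norm (matrix_inv (M + \<Delta>) - matrix_inv M) \<le> 2 * (norm N)\<^sup>2 * K1\<^sup>2 * norm \<Delta>"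
    if Dd: "norm \<Delta> < d" for \<Delta> :: "complex^'n^'n"
  proof -
    have key: "(norm N + 1) * (K1\<^sup>2 + K2\<^sup>2) * norm \<Delta> \<le> 1/2"
    proof -
      have "(norm N + 1) * (K1\<^sup>2 + K2\<^sup>2) * norm \<Delta> \<le> (norm N + 1) * (K1\<^sup>2 + K2\<^sup>2) * d"
        using Dd by (intro mult_left_mono) (auto intro: add_nonneg_nonneg)
      also have "\<dots> = 1/2" using pos unfolding d_def
        by (simp add: field_simps)
      finally show ?thesis .
    qed
    have small2: "norm N * norm \<Delta> * K2\<^sup>2 \<le> 1/2"
    proof -
      have "norm N * norm \<Delta> * K2\<^sup>2 = (norm N * K2\<^sup>2) * norm \<Delta>" by simp
      also have "\<dots> \<le> ((norm N + 1) * (K1\<^sup>2 + K2\<^sup>2)) * norm \<Delta>"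
        by (rule mult_right_mono[OF _ norm_ge_zero]) (intro mult_mono, auto)
      finally have "norm N * norm \<Delta> * K2\<^sup>2 \<le> (norm N + 1) * (K1\<^sup>2 + K2\<^sup>2) * norm \<Delta>" .
      then show ?thesis using key by linarith
    qed
    have small1: "norm N * norm \<Delta> * K1\<^sup>2 \<le> 1/2"
    proof -
      have "norm N * norm \<Delta> * K1\<^sup>2 = (norm N * K1\<^sup>2) * norm \<Delta>" by simp
      also have "\<dots> \<le> ((norm N + 1) * (K1\<^sup>2 + K2\<^sup>2)) * norm \<Delta>"
        by (rule mult_right_mono[OF _ norm_ge_zero]) (intro mult_mono, auto)
      finally have "norm N * norm \<Delta> * K1\<^sup>2 \<le> (norm N + 1) * (K1\<^sup>2 + K2\<^sup>2) * norm \<Delta>" .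
      then show ?thesis using key by linarith
    qed
    have inj: "\<forall>v. (M + \<Delta>) *v v = 0 \<longrightarrow> v = 0"
    proof (intro allI impI)
      fix v assume "(M + \<Delta>) *v v = 0"
      then have "M *v v = - (\<Delta> *v v)" by (simp add: matrix_vector_mult_add_rdistrib eq_neg_iff_add_eq_0)
      then have "N *v (M *v v) = - (N *v (\<Delta> *v v))" by (simp add: vec.neg)
      then have v: "v = - (N *v (\<Delta> *v v))" by (simp add: matrix_vector_mul_assoc MN)
      have "norm v = norm (N *v (\<Delta> *v v))" using v by (metis norm_minus_cancel)
      also have "\<dots> \<le> norm N * norm (\<Delta> *v v) * K2" by (rule K2(2))
      also have "\<dots> \<le> norm N * (norm \<Delta> * norm v * K2) * K2"
        using K2 by (intro mult_right_mono mult_left_mono K2(2)) auto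
      also have "\<dots> = (norm N * norm \<Delta> * K2\<^sup>2) * norm v" by (simp add: power2_eq_square)
      also have "\<dots> \<le> 1/2 * norm v" by (intro mult_right_mono small2) auto
      finally show "v = 0" by simp
    qed
    then obtain B where B: "B ** (M + \<Delta>) = mat 1" using matrix_left_invertible_ker by blast
    then have B2: "(M + \<Delta>) ** B = mat 1" using matrix_left_right_inverse by blast
    have inv: "invertible (M + \<Delta>)" unfolding invertible_def using B B2 by blast
    define X where "X = matrix_inv (M + \<Delta>)"
    have X1: "(M + \<Delta>) ** X = mat 1" using mi_both[OF inv] by (simp add: X_def)
    have "N ** ((M + \<Delta>) ** X) = N" by (simp add: X1)
    then have XN: "X = N - N ** \<Delta> ** X"
      by (simp add: matrix_add_ldistrib mm_add_left matrix_mul_assoc MN algebra_simps)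
    have bnd: "norm (N ** \<Delta> ** X) \<le> (norm N * norm \<Delta> * K1\<^sup>2) * norm X"
    proof -
      have "norm (N ** \<Delta> ** X) \<le> norm (N ** \<Delta>) * norm X * K1" using K1(2)[of "N ** \<Delta>" X] by simp
      also have "\<dots> \<le> (norm N * norm \<Delta> * K1) * norm X * K1"
        using K1 by (intro mult_right_mono K1(2)) auto
      finally show ?thesis by (simp add: power2_eq_square algebra_simps)
    qed
    have "norm X \<le> norm N + norm (N ** \<Delta> ** X)"
      using XN norm_triangle_ineq4 by metis
    also have "\<dots> \<le> norm N + 1/2 * norm X"
      using bnd mult_right_mono[OF small1 norm_ge_zero, of X] by linarith
    finally have nX: "norm X \<le> 2 * norm N" by simp
    have "X - N = - (N ** \<Delta> ** X)" using XN by (simp add: algebra_simps)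
    then have "norm (X - N) = norm (N ** \<Delta> ** X)" by simp
    also have "\<dots> \<le> (norm N * norm \<Delta> * K1\<^sup>2) * (2 * norm N)"
      using bnd mult_left_mono[OF nX, of "norm N * norm \<Delta> * K1\<^sup>2"] by simp
    also have "\<dots> = 2 * (norm N)\<^sup>2 * K1\<^sup>2 * norm \<Delta>" by (simp add: power2_eq_square)
    finally show ?thesis using inv by (simp add: X_def N_def)
  qed
  show ?thesis using dpos main by blast
qed

lemma inv_deriv:
  fixes S :: "real \<Rightarrow> complex^'n^'n"
  assumes d: "(S has_vector_derivative S') (at x)" and inv: "invertible (S x)"
  shows "((\<lambda>y. matrix_inv (S y)) has_vector_derivative
            - (matrix_inv (S x) ** S' ** matrix_inv (S x))) (at x)"
proof -
  obtain d0 C where d0: "d0 > 0" and dC: "\<And>\<Delta>. norm \<Delta> < d0 \<Longrightarrow> invertible (S x + \<Delta>) \<and>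
           norm (matrix_inv (S x + \<Delta>) - matrix_inv (S x)) \<le> C * norm \<Delta>"
    using inv_perturb[OF inv] by blast
  define N where "N = matrix_inv (S x)"
  have cont: "(S \<longlongrightarrow> S x) (at x)"
    using has_vector_derivative_continuous[OF d] by (simp add: isCont_def)
  have ev: "\<forall>\<^sub>F y in at x. norm (S y - S x) < d0"
    using cont d0 unfolding tendsto_iff dist_norm by blast
  have ev2: "\<forall>\<^sub>F y in at x. invertible (S y) \<and> norm (matrix_inv (S y) - N) \<le> C * norm (S y - S x)"
    using ev
  proof (rule eventually_mono)
    fix y assume "norm (S y - S x) < d0"
    from dC[OF this] show "invertible (S y) \<and> norm (matrix_inv (S y) - N) \<le> C * norm (S y - S x)"
      by (simp add: N_def)
  qed
  have "((\<lambda>y. S y - S x) \<longlongrightarrow> 0) (at x)" using cont by (simp add: LIM_zero)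
  then have "((\<lambda>y. C * norm (S y - S x)) \<longlongrightarrow> 0) (at x)"
    using tendsto_mult_right_zero tendsto_norm_zero by blast
  then have "((\<lambda>y. matrix_inv (S y) - N) \<longlongrightarrow> 0) (at x)"
    by (rule Lim_null_comparison[rotated]) (use ev2 in \<open>auto elim: eventually_mono\<close>)
  then have Xlim: "((\<lambda>y. matrix_inv (S y)) \<longlongrightarrow> N) (at x)" by (simp add: LIM_zero_iff)
  have Qlim: "((\<lambda>y. (S y - S x) /\<^sub>R (y - x)) \<longlongrightarrow> S') (at x)"
    using d hvd_quot_iff by blast
  have lim: "((\<lambda>y. - (N ** ((S y - S x) /\<^sub>R (y - x)) ** matrix_inv (S y))) \<longlongrightarrow> - (N ** S' ** N)) (at x)"
    by (intro tendsto_minus bounded_bilinear.tendsto[OF bb_mm] tendsto_const Qlim Xlim)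
  have ev3: "\<forall>\<^sub>F y in at x. - (N ** ((S y - S x) /\<^sub>R (y - x)) ** matrix_inv (S y)) =
        (matrix_inv (S y) - N) /\<^sub>R (y - x)"
    using ev2
  proof (rule eventually_mono)
    fix y assume "invertible (S y) \<and> norm (matrix_inv (S y) - N) \<le> C * norm (S y - S x)"
    then have iy: "invertible (S y)" by blast
    have "N ** (S x - S y) ** matrix_inv (S y) = matrix_inv (S y) - N"
      using mi_both[OF iy] mi_both[OF inv]
      by (simp add: mm_diff_left mm_diff_right N_def flip: matrix_mul_assoc)
    then have eqq: "- (N ** (S y - S x) ** matrix_inv (S y)) = matrix_inv (S y) - N"
      by (simp add: mm_diff_left mm_diff_right algebra_simps)
    have e1: "N ** ((S y - S x) /\<^sub>R (y - x)) ** matrix_inv (S y) =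
        inverse (y - x) *\<^sub>R (N ** (S y - S x) ** matrix_inv (S y))"
      by (simp add: matrix_scalar_ac scalar_matrix_assoc)
    show "- (N ** ((S y - S x) /\<^sub>R (y - x)) ** matrix_inv (S y)) =
        (matrix_inv (S y) - N) /\<^sub>R (y - x)"
      by (simp only: e1 scaleR_minus_right[symmetric] eqq)
  qed
  show ?thesis unfolding hvd_quot_iff
    using Lim_transform_eventually[OF lim ev3] by (simp add: N_def)
qed




lemma mpow_Suc: "mpow A (Suc k) = A ** mpow A k" by (simp add: mpow_def)
lemma mpow_0: "mpow A 0 = mat 1" by (simp add: mpow_def)

lemma mm_scaleR_right: "(A::complex^'n^'m) ** (c *\<^sub>R B) = c *\<^sub>R (A ** B)"
  by (simp add: matrix_scalar_ac scalar_matrix_assoc)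

lemma mpow_scaleR: "mpow (c *\<^sub>R (A::complex^'n^'n)) k = (c ^ k) *\<^sub>R mpow A k"
  by (induction k) (simp_all add: mpow_0 mpow_Suc mm_scaleR_right scalar_matrix_assoc[symmetric] mult.commute)

lemma mpow_norm:
  obtains c B where "c \<ge> 0" "B \<ge> 0" "\<And>k. norm (mpow (A::complex^'n^'n) k) \<le> c * B ^ k"
proof -
  obtain K where K: "K > 0" "\<And>(a::complex^'n^'n) (b::complex^'n^'n). norm (a ** b) \<le> norm a * norm b * K"
    using bounded_bilinear.pos_bounded[OF bb_mm] by blast
  have "norm (mpow A k) \<le> norm (mat 1 :: complex^'n^'n) * (K * norm A) ^ k" for k
  proof (induction k)
    case 0 then show ?case by (simp add: mpow_0)
  next
    case (Suc k)
    have "norm (mpow A (Suc k)) \<le> norm A * norm (mpow A k) * K" unfolding mpow_Suc by (rule K(2))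
    also have "\<dots> \<le> norm A * (norm (mat 1 :: complex^'n^'n) * (K * norm A) ^ k) * K"
      using Suc K by (intro mult_right_mono mult_left_mono) auto
    also have "\<dots> = norm (mat 1 :: complex^'n^'n) * (K * norm A) ^ Suc k" by (simp add: algebra_simps)
    finally show ?case .
  qed
  then show ?thesis using that[of "norm (mat 1 :: complex^'n^'n)" "K * norm A"] K by auto
qed

lemma mexp_deriv:
  fixes A :: "complex^'n^'n"
  shows "((\<lambda>s. mexp ((-s) *\<^sub>R A)) has_vector_derivative - (A ** mexp ((-t) *\<^sub>R A))) (at t)"
proof -
  obtain c B where cB: "c \<ge> 0" "B \<ge> 0" "\<And>k. norm (mpow A k) \<le> c * B ^ k"
    using mpow_norm by blast
  define R where "R = \<bar>t\<bar> + 1"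
  have R1: "R \<ge> 1" by (simp add: R_def)
  define f where "f k s = ((-s)^k / fact k) *\<^sub>R mpow A k" for k s
  define d where "d k s = (- (of_nat k * (-s)^(k - 1)) / fact k) *\<^sub>R mpow A k" for k s
  define M where "M k = c * ((2*R*B)^k / fact k)" for k
  have summM: "summable M"
    unfolding M_def using summable_exp_generic[of "2*R*B"]
    by (intro summable_mult) (simp add: divide_inverse mult.commute)
  have sR: "\<bar>s\<bar> \<le> R" if "s \<in> ball t 1" for s
    using that by (auto simp: R_def dist_real_def)
  have bnd_d: "norm (d k s) \<le> M k" if s: "s \<in> ball t 1" for k s
  proof -
    have "of_nat k * \<bar>s\<bar> ^ (k - 1) \<le> 2 ^ k * R ^ k"
    proof (cases k)
      case 0 then show ?thesis by simp
    next
      case (Suc j)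
      have "\<bar>s\<bar> ^ j \<le> R ^ j" using sR[OF s] by (intro power_mono) auto
      also have "\<dots> \<le> R ^ Suc j" using R1 by (intro power_increasing) auto
      finally have a: "\<bar>s\<bar> ^ j \<le> R ^ Suc j" .
      have b: "real (Suc j) \<le> 2 ^ Suc j"
        using less_exp[of "Suc j"] by (metis of_nat_le_iff of_nat_numeral of_nat_power less_imp_le)
      show ?thesis using Suc mult_mono[OF b a] by simp
    qed
    note kk = this
    have "norm (d k s) = (of_nat k * \<bar>s\<bar> ^ (k - 1) / fact k) * norm (mpow A k)"
      unfolding d_def by (simp add: abs_mult power_abs)
    also have "\<dots> \<le> (2 ^ k * R ^ k / fact k) * (c * B ^ k)"
      using cB(3)[of k] R1 by (intro mult_mono divide_right_mono[OF kk]) auto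
    finally have "norm (d k s) \<le> (2 ^ k * R ^ k / fact k) * (c * B ^ k)" .
    also have "\<dots> = M k" by (simp add: M_def power_mult_distrib)
    finally show ?thesis .
  qed
  have bnd_f: "norm (f k t) \<le> M k" for k
  proof -
    have "\<bar>t\<bar> ^ k \<le> 2 ^ k * R ^ k"
    proof -
      have "\<bar>t\<bar> ^ k \<le> R ^ k" by (intro power_mono) (auto simp: R_def)
      also have "\<dots> \<le> 2 ^ k * R ^ k" using R1 by simp
      finally show ?thesis .
    qed
    note kk = this
    have "norm (f k t) = (\<bar>t\<bar> ^ k / fact k) * norm (mpow A k)"
      unfolding f_def by (simp add: abs_mult power_abs)
    also have "\<dots> \<le> (2 ^ k * R ^ k / fact k) * (c * B ^ k)"
      using cB(3)[of k] R1 by (intro mult_mono divide_right_mono[OF kk]) auto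
    finally have "norm (f k t) \<le> (2 ^ k * R ^ k / fact k) * (c * B ^ k)" .
    also have "\<dots> = M k" by (simp add: M_def power_mult_distrib)
    finally show ?thesis .
  qed
  have der: "(f k has_vector_derivative d k s) (at s within ball t 1)" for k s
  proof -
    have "((\<lambda>s. (-s)^k / fact k) has_field_derivative (- (of_nat k * (-s)^(k - 1)) / fact k)) (at s within ball t 1)"
      by (auto intro!: derivative_eq_intros)
    then show ?thesis unfolding f_def d_def
      using has_vector_derivative_scaleR[OF _ has_vector_derivative_const[of "mpow A k"]] by fastforce
  qed
  have U: "uniform_limit (ball t 1) (\<lambda>n x. \<Sum>i<n. d i x) (\<lambda>x. \<Sum>i. d i x) sequentially"
    by (rule Weierstrass_m_test[OF bnd_d summM])
  have sumf: "summable (\<lambda>k. f k t)"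
    by (rule summable_comparison_test[OF _ summM]) (use bnd_f in auto)
  obtain g where g: "\<forall>x\<in>ball t 1. (\<lambda>n. f n x) sums g x \<and>
      (g has_derivative (\<lambda>h. h *\<^sub>R (\<Sum>i. d i x))) (at x within ball t 1)"
  proof -
    have "\<exists>g. \<forall>x\<in>ball t 1. (\<lambda>n. f n x) sums g x \<and>
      (g has_derivative (\<lambda>h. h *\<^sub>R (\<Sum>i. d i x))) (at x within ball t 1)"
    proof (rule has_derivative_series[where f' = "\<lambda>n x h. h *\<^sub>R d n x"])
      show "convex (ball t (1::real))" by simp
      show "\<And>n x. x \<in> ball t 1 \<Longrightarrow> (f n has_derivative (\<lambda>h. h *\<^sub>R d n x)) (at x within ball t 1)"
        using der unfolding has_vector_derivative_def by blast
      show "t \<in> ball t 1" by simp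
      show "(\<lambda>n. f n t) sums (\<Sum>k. f k t)" using sumf by (simp add: summable_sums)
      fix e :: real assume "e > 0"
      then have "\<forall>\<^sub>F n in sequentially. \<forall>x\<in>ball t 1. dist (\<Sum>i<n. d i x) (\<Sum>i. d i x) < e"
        using U unfolding uniform_limit_iff by blast
      then show "\<forall>\<^sub>F n in sequentially. \<forall>x\<in>ball t 1. \<forall>h. norm ((\<Sum>i<n. h *\<^sub>R d i x) - h *\<^sub>R (\<Sum>i. d i x)) \<le> e * norm h"
      proof (rule eventually_mono)
        fix n assume H: "\<forall>x\<in>ball t 1. dist (\<Sum>i<n. d i x) (\<Sum>i. d i x) < e"
        show "\<forall>x\<in>ball t 1. \<forall>h. norm ((\<Sum>i<n. h *\<^sub>R d i x) - h *\<^sub>R (\<Sum>i. d i x)) \<le> e * norm h"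
        proof (intro ballI allI)
          fix x h assume x: "x \<in> ball t 1"
          have "norm ((\<Sum>i<n. h *\<^sub>R d i x) - h *\<^sub>R (\<Sum>i. d i x)) = \<bar>h\<bar> * dist (\<Sum>i<n. d i x) (\<Sum>i. d i x)"
            by (simp add: dist_norm flip: scaleR_sum_right scaleR_diff_right)
          also have "\<dots> \<le> \<bar>h\<bar> * e" using H x by (intro mult_left_mono) (auto simp: less_imp_le)
          finally show "norm ((\<Sum>i<n. h *\<^sub>R d i x) - h *\<^sub>R (\<Sum>i. d i x)) \<le> e * norm h" by (simp add: mult.commute)
        qed
      qed
    qed
    then show ?thesis using that by blast
  qed
  have mexp_eq: "mexp ((-s) *\<^sub>R A) = (\<Sum>k. f k s)" for s
    unfolding mexp_def f_def mpow_scaleR by (simp add: divide_inverse mult.commute)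
  have gs: "g s = mexp ((-s) *\<^sub>R A)" if "s \<in> ball t 1" for s
    using g that mexp_eq sums_unique by metis
  have "(g has_vector_derivative (\<Sum>i. d i t)) (at t)"
  proof -
    have "(g has_derivative (\<lambda>h. h *\<^sub>R (\<Sum>i. d i t))) (at t within ball t 1)" using g by simp
    then show ?thesis unfolding has_vector_derivative_def using at_within_open[of t "ball t 1"] by simp
  qed
  then have D1: "((\<lambda>s. mexp ((-s) *\<^sub>R A)) has_vector_derivative (\<Sum>i. d i t)) (at t)"
    by (rule has_vector_derivative_transform_within_open[where S="ball t 1"]) (auto simp: gs)
  have sumd: "summable (\<lambda>k. d k t)"
    by (rule summable_comparison_test[OF _ summM]) (use bnd_d in auto)
  have dS: "d (Suc k) t = - (A ** f k t)" for k
    unfolding d_def f_def mpow_Suc mm_scaleR_right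
    by (simp add: scaleR_minus_left[symmetric] del: scaleR_minus_left)
  have "(\<Sum>i. d i t) = (\<Sum>k. d (Suc k) t) + d 0 t"
    using suminf_split_head[OF sumd] by simp
  also have "\<dots> = (\<Sum>k. - (A ** f k t))" by (simp only: dS) (simp add: d_def)
  also have "\<dots> = - (\<Sum>k. A ** f k t)"
    using bounded_linear.summable[OF bounded_bilinear.bounded_linear_right[OF bb_mm, of A] sumf]
    by (rule suminf_minus)
  also have "\<dots> = - (A ** (\<Sum>k. f k t))"
    using bounded_linear.suminf[OF bounded_bilinear.bounded_linear_right[OF bb_mm, of A] sumf] by simp
  also have "\<dots> = - (A ** mexp ((-t) *\<^sub>R A))" by (simp only: mexp_eq)
  finally show ?thesis using D1 by simp
qed




lemma lmeas_sub_Icc: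
  assumes "M \<in> sets lebesgue" "M \<subseteq> {a..b::real}"
  shows "M \<in> lmeasurable"
  by (rule fmeasurableI2[of "{a..b}"]) (use assms in auto)

lemma ai_subset:
  fixes f :: "real \<Rightarrow> 'b::euclidean_space"
  assumes "f absolutely_integrable_on {a..b}" "M \<in> sets lebesgue" "M \<subseteq> {a..b}"
  shows "f absolutely_integrable_on M"
  using set_integrable_subset[OF assms] .

lemma AC_integral:
  fixes f :: "real \<Rightarrow> real"
  assumes f: "f absolutely_integrable_on {a..b}" and e: "e > 0"
  shows "\<exists>\<delta>>0. \<forall>M. M \<in> sets lebesgue \<and> M \<subseteq> {a..b} \<and> measure lebesgue M < \<delta> \<longrightarrow>
            integral M (\<lambda>x. \<bar>f x\<bar>) \<le> e"
proof -
  define g where "g n x = \<bar>f x\<bar> - min \<bar>f x\<bar> (real n)" for n x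
  have fa: "(\<lambda>x. \<bar>f x\<bar>) absolutely_integrable_on {a..b}"
    using f by (simp add: absolutely_integrable_on_def)
  have ca: "(\<lambda>x. c) absolutely_integrable_on {a..b}" for c :: real by simp
  have ma: "(\<lambda>x. min \<bar>f x\<bar> (real n)) absolutely_integrable_on {a..b}" for n
    by (rule absolutely_integrable_min_1[OF fa ca])
  have ga: "g n absolutely_integrable_on {a..b}" for n
    unfolding g_def by (intro set_integral_diff(1) fa ma)
  have "(\<lambda>n. integral {a..b} (g n)) \<longlonglongrightarrow> integral {a..b} (\<lambda>x. 0::real)"
  proof (rule dominated_convergence(2))
    show "g n integrable_on {a..b}" for n using ga by (simp add: absolutely_integrable_on_def)
    show "(\<lambda>x. \<bar>f x\<bar>) integrable_on {a..b}" using fa by (simp add: absolutely_integrable_on_def)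
    show "norm (g n x) \<le> \<bar>f x\<bar>" for n x by (simp add: g_def)
    show "(\<lambda>n. g n x) \<longlonglongrightarrow> 0" for x
    proof (rule tendsto_eventually)
      obtain N :: nat where "\<bar>f x\<bar> \<le> real N" using real_arch_simple by blast
      then show "\<forall>\<^sub>F n in sequentially. g n x = 0"
        unfolding eventually_sequentially g_def by (intro exI[of _ N]) auto
    qed
  qed
  then have "(\<lambda>n. integral {a..b} (g n)) \<longlonglongrightarrow> 0" by simp
  then obtain N where N: "\<bar>integral {a..b} (g N)\<bar> < e / 2"
    using e unfolding LIMSEQ_def dist_real_def
  proof -
    assume H: "\<forall>r>0. \<exists>no. \<forall>n\<ge>no. \<bar>integral {a..b} (g n) - 0\<bar> < r" and "0 < e"
    then obtain no where "\<forall>n\<ge>no. \<bar>integral {a..b} (g n) - 0\<bar> < e/2" by (meson half_gt_zero)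
    then show ?thesis using that[of no] by simp
  qed
  define \<delta> where "\<delta> = e / (2 * (real N + 1))"
  have dpos: "\<delta> > 0" using e by (simp add: \<delta>_def)
  show ?thesis
  proof (intro exI[of _ \<delta>] conjI dpos allI impI)
    fix M assume M: "M \<in> sets lebesgue \<and> M \<subseteq> {a..b} \<and> measure lebesgue M < \<delta>"
    then have Ml: "M \<in> lmeasurable" using lmeas_sub_Icc by blast
    have gM: "g N integrable_on M" using ai_subset[OF ga, of M] M by (simp add: absolutely_integrable_on_def)
    have mM: "(\<lambda>x. min \<bar>f x\<bar> (real N)) integrable_on M" using ai_subset[OF ma, of M] M by (simp add: absolutely_integrable_on_def)
    have "integral M (\<lambda>x. \<bar>f x\<bar>) = integral M (g N) + integral M (\<lambda>x. min \<bar>f x\<bar> (real N))"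
      by (subst integral_add[OF gM mM, symmetric]) (simp add: g_def)
    also have "integral M (g N) \<le> integral {a..b} (g N)"
      using M gM ga by (intro integral_subset_le) (auto simp: absolutely_integrable_on_def g_def)
    also have "integral M (\<lambda>x. min \<bar>f x\<bar> (real N)) \<le> integral M (\<lambda>x. real N)"
      using mM absolutely_integrable_on_const[OF Ml, of "real N"]
      by (intro integral_le) (auto simp: absolutely_integrable_on_def)
    also have "integral M (\<lambda>x. real N) = real N * measure lebesgue M"
      using lmeasure_integral[OF Ml] integral_mult_right[of M "real N" "\<lambda>x. 1"] by simp
    also have "real N * measure lebesgue M \<le> real N * \<delta>"
      using M by (intro mult_left_mono) auto
    also have "real N * \<delta> \<le> e / 2" using e by (simp add: \<delta>_def field_simps)
    finally show "integral M (\<lambda>x. \<bar>f x\<bar>) \<le> e" using N by linarith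
  qed
qed

lemma integral_disj_UN:
  fixes g :: "real \<Rightarrow> real"
  assumes g: "g absolutely_integrable_on {a..b}" and F: "finite F"
    and B: "\<And>i. i \<in> F \<Longrightarrow> B i \<in> sets lebesgue \<and> B i \<subseteq> {a..b}"
    and pw: "pairwise (\<lambda>i j. disjnt (B i) (B j)) F"
  shows "integral (\<Union>i\<in>F. B i) g = (\<Sum>i\<in>F. integral (B i) g)"
  using F B pw
proof (induction F rule: finite_induct)
  case empty then show ?case by simp
next
  case (insert k F)
  have pwF: "pairwise (\<lambda>i j. disjnt (B i) (B j)) F" by (rule pairwise_subset[OF insert.prems(2)]) blast
  have IH: "integral (\<Union>i\<in>F. B i) g = (\<Sum>i\<in>F. integral (B i) g)"
    by (rule insert.IH) (use insert.prems(1) pwF in auto)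
  have s1: "(\<Union>i\<in>F. B i) \<in> sets lebesgue"
    by (rule sets.finite_UN[OF insert.hyps(1)]) (use insert.prems(1) in auto)
  have s2: "(\<Union>i\<in>F. B i) \<subseteq> {a..b}" using insert.prems by auto
  have i1: "g integrable_on B k" using ai_subset[OF g, of "B k"] insert.prems
    by (simp add: absolutely_integrable_on_def)
  have i2: "g integrable_on (\<Union>i\<in>F. B i)" using ai_subset[OF g s1 s2]
    by (simp add: absolutely_integrable_on_def)
  have "\<forall>i\<in>F. disjnt (B k) (B i)"
  proof
    fix i assume "i \<in> F"
    then have "k \<in> insert k F" "i \<in> insert k F" "k \<noteq> i" using insert.hyps(2) by auto
    then show "disjnt (B k) (B i)" using insert.prems(2) unfolding pairwise_def by blast
  qed
  then have disj: "B k \<inter> (\<Union>i\<in>F. B i) = {}" unfolding disjnt_def by blast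
  have "integral (\<Union>i\<in>insert k F. B i) g = integral (B k \<union> (\<Union>i\<in>F. B i)) g" by simp
  also have "\<dots> = integral (B k) g + integral (\<Union>i\<in>F. B i) g"
    by (rule integral_Un[OF i1 i2]) (simp add: disj)
  also have "\<dots> = integral (B k) g + (\<Sum>i\<in>F. integral (B i) g)" by (simp only: IH)
  finally show ?case using insert.hyps(1,2) by (simp add: sum.insert)
qed

lemma int_split:
  fixes g :: "real \<Rightarrow> real"
  assumes g: "g absolutely_integrable_on {a..b}" and V: "V \<in> sets lebesgue" "V \<subseteq> {a..b}"
    and P: "P \<in> sets lebesgue"
  shows "integral V g = integral (V \<inter> P) g + integral (V - P) g"
proof -
  have i1: "g integrable_on (V \<inter> P)" using ai_subset[OF g, of "V \<inter> P"] V P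
    by (auto simp: absolutely_integrable_on_def)
  have i2: "g integrable_on (V - P)" using ai_subset[OF g, of "V - P"] V P
    by (auto simp: absolutely_integrable_on_def)
  have "integral ((V \<inter> P) \<union> (V - P)) g = integral (V \<inter> P) g + integral (V - P) g"
  proof (rule integral_Un[OF i1 i2])
    have "V \<inter> P \<inter> (V - P) = {}" by blast
    then show "negligible (V \<inter> P \<inter> (V - P))" by simp
  qed
  moreover have "(V \<inter> P) \<union> (V - P) = V" by blast
  ultimately show ?thesis by simp
qed

lemma cball_real_Icc: "cball (c::real) \<rho> = {c - \<rho>..c + \<rho>}"
  by (rule cball_eq_atLeastAtMost)

lemma key_negl:
  fixes f :: "real \<Rightarrow> real"
  assumes f: "f absolutely_integrable_on {a..b}" and qr: "q < r"
  shows "negligible {x. a < x \<and> x < b \<and> f x < q \<and> (\<forall>d>0. \<exists>y. a \<le> y \<and> y \<le> b \<and> y \<noteq> x \<and>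
            \<bar>y - x\<bar> < d \<and> r * \<bar>y - x\<bar> < integral {min x y..max x y} f)}"
    (is "negligible ?E")
proof -
  have fm: "f \<in> borel_measurable (lebesgue_on {a..b})"
    using f absolutely_integrable_measurable_real[of "{a..b}" f] by auto
  have "f -` {..<q} \<inter> space (lebesgue_on {a..b}) \<in> sets (lebesgue_on {a..b})"
    by (rule measurable_sets[OF fm]) simp
  then have "f -` {..<q} \<inter> {a..b} \<in> sets lebesgue"
    by (simp add: sets_restrict_space_iff)
  then have "(f -` {..<q} \<inter> {a..b}) \<inter> {a<..<b} \<in> sets lebesgue" by auto
  moreover have "(f -` {..<q} \<inter> {a..b}) \<inter> {a<..<b} = {x. a < x \<and> x < b \<and> f x < q}" by auto
  ultimately have Pm: "{x. a < x \<and> x < b \<and> f x < q} \<in> sets lebesgue" by simp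
  define P where "P = {x. a < x \<and> x < b \<and> f x < q}"
  have Pm: "P \<in> sets lebesgue" using Pm by (simp add: P_def)
  have EP: "?E \<subseteq> P" by (auto simp: P_def)
  have fabs: "(\<lambda>x. \<bar>f x\<bar>) absolutely_integrable_on {a..b}"
    using f by (simp add: absolutely_integrable_on_def)
  have one: "(\<lambda>x. 1::real) absolutely_integrable_on {a..b}" by simp
  show ?thesis unfolding negligible_outer_le
  proof (intro allI impI)
    fix e :: real assume e: "e > 0"
    define \<eta> where "\<eta> = e * (r - q) / 2"
    have eta: "\<eta> > 0" using e qr by (simp add: \<eta>_def)
    obtain \<delta> where \<delta>: "\<delta> > 0" and \<delta>M: "\<And>M. M \<in> sets lebesgue \<Longrightarrow> M \<subseteq> {a..b} \<Longrightarrow>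
        measure lebesgue M < \<delta> \<Longrightarrow> integral M (\<lambda>x. \<bar>f x\<bar>) \<le> \<eta>"
      using AC_integral[OF f eta] by blast
    define \<delta>' where "\<delta>' = min \<delta> (e * (r - q) / (2 * (\<bar>q\<bar> + 1)))"
    have d'pos: "\<delta>' > 0" using \<delta> e qr by (simp add: \<delta>'_def)
    obtain U where U: "open U" "P \<subseteq> U" "U - P \<in> lmeasurable" "emeasure lebesgue (U - P) < ennreal \<delta>'"
      using sets_lebesgue_outer_open[OF Pm d'pos] by blast
    have mUP: "measure lebesgue (U - P) < \<delta>'"
      using U(3,4) d'pos by (simp add: emeasure_eq_measure2 ennreal_less_iff)
    define U' where "U' = U \<inter> {a<..<b}"
    have U'o: "open U'" using U(1) by (simp add: U'_def open_Int)
    have PU': "P \<subseteq> U'" using U(2) by (auto simp: U'_def P_def)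
    have U'ab: "U' \<subseteq> {a..b}" by (auto simp: U'_def)
    define K where "K = {i::real\<times>real. snd i > 0 \<and> cball (fst i) (snd i) \<subseteq> U' \<and>
                        r * (2 * snd i) < integral (cball (fst i) (snd i)) f}"
    have cover: "\<exists>i. i \<in> K \<and> x \<in> cball (fst i) (snd i) \<and> snd i < d" if x: "x \<in> ?E" and d: "0 < d" for x d
    proof -
      have "x \<in> U'" using x EP PU' by blast
      then obtain d0 where d0: "d0 > 0" "ball x d0 \<subseteq> U'" using U'o open_contains_ball by blast
      have "min d d0 > 0" using d d0 by simp
      then obtain y where y: "a \<le> y" "y \<le> b" "y \<noteq> x" "\<bar>y - x\<bar> < min d d0"
          "r * \<bar>y - x\<bar> < integral {min x y..max x y} f"
        using x by blast
      define i where "i = ((x + y) / 2, \<bar>y - x\<bar> / 2)"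
      have ci: "cball (fst i) (snd i) = {min x y..max x y}"
        unfolding i_def cball_real_Icc by (cases "x \<le> y") (auto simp: min_def max_def field_simps)
      have "{min x y..max x y} \<subseteq> ball x d0"
        using y(4) by (auto simp: dist_real_def)
      then have "cball (fst i) (snd i) \<subseteq> U'" using ci d0(2) by blast
      moreover have "snd i > 0" using y(3) by (simp add: i_def)
      moreover have "r * (2 * snd i) < integral (cball (fst i) (snd i)) f"
        using y(5) ci by (simp add: i_def)
      ultimately have "i \<in> K" by (simp add: K_def)
      moreover have "x \<in> cball (fst i) (snd i)" using ci by simp
      moreover have "snd i < d"
      proof -
        have "snd i = \<bar>y - x\<bar> / 2" by (simp add: i_def)
        moreover have "\<bar>y - x\<bar> < d" using y(4) by simp
        ultimately show ?thesis using d by argo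
      qed
      ultimately show ?thesis by blast
    qed
    obtain C where C: "countable C" "C \<subseteq> K"
      and Cpw: "pairwise (\<lambda>i j. disjnt (cball (fst i) (snd i)) (cball (fst j) (snd j))) C"
      and Cneg: "negligible (?E - (\<Union>i\<in>C. cball (fst i) (snd i)))"
      using Vitali_covering_theorem_cballs[of K snd ?E fst] cover by (auto simp: K_def)
    define B where "B i = cball (fst i) (snd i)" for i :: "real \<times> real"
    have BK: "B i \<subseteq> {a..b} \<and> B i \<in> sets lebesgue" if "i \<in> C" for i
      using that C(2) U'ab by (auto simp: B_def K_def)
    have B1: "integral (B i) (\<lambda>x. 1::real) = 2 * snd i" if "i \<in> C" for i
      using that C(2) by (auto simp: B_def K_def cball_real_Icc)
    have Bf: "r * (2 * snd i) < integral (B i) f" if "i \<in> C" for i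
      using that C(2) by (auto simp: B_def K_def)
    have bound: "measure lebesgue (\<Union>i\<in>I'. B i) \<le> e" if I': "I' \<subseteq> C" "finite I'" for I'
    proof -
      define V where "V = (\<Union>i\<in>I'. B i)"
      have BI: "\<And>i. i \<in> I' \<Longrightarrow> B i \<in> sets lebesgue \<and> B i \<subseteq> {a..b}" using BK I' by blast
      have pwI: "pairwise (\<lambda>i j. disjnt (B i) (B j)) I'"
        using pairwise_subset[OF Cpw I'(1)] by (simp add: B_def)
      have Vm: "V \<in> sets lebesgue" unfolding V_def
        by (rule sets.finite_UN[OF I'(2)]) (use BI in auto)
      have Vab: "V \<subseteq> {a..b}" using BI by (auto simp: V_def)
      have VU: "V \<subseteq> U'" using I' C(2) by (auto simp: V_def B_def K_def)
      have Vl: "V \<in> lmeasurable" using lmeas_sub_Icc[OF Vm Vab] .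
      have "measure lebesgue V = integral V (\<lambda>x. 1::real)" by (rule lmeasure_integral[OF Vl])
      also have "\<dots> = (\<Sum>i\<in>I'. integral (B i) (\<lambda>x. 1::real))"
        unfolding V_def by (rule integral_disj_UN[OF one I'(2) BI pwI])
      also have "\<dots> = (\<Sum>i\<in>I'. 2 * snd i)"
        by (rule sum.cong) (use B1 I'(1) in auto)
      finally have mV: "measure lebesgue V = (\<Sum>i\<in>I'. 2 * snd i)" .
      have IV: "integral V f = (\<Sum>i\<in>I'. integral (B i) f)"
        using integral_disj_UN[OF f I'(2) BI pwI] by (simp add: V_def)
      have r1: "r * measure lebesgue V \<le> integral V f"
        unfolding mV IV sum_distrib_left using Bf I'(1) by (intro sum_mono) (auto intro: less_imp_le)
      have VPm: "V \<inter> P \<in> sets lebesgue" "V - P \<in> sets lebesgue" using Vm Pm by auto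
      have VPab: "V \<inter> P \<subseteq> {a..b}" "V - P \<subseteq> {a..b}" using Vab by auto
      have VPl: "V \<inter> P \<in> lmeasurable" "V - P \<in> lmeasurable"
        using lmeas_sub_Icc VPm VPab by blast+
      have s1: "integral V f = integral (V \<inter> P) f + integral (V - P) f"
        by (rule int_split[OF f Vm Vab Pm])
      have s2: "measure lebesgue V = measure lebesgue (V \<inter> P) + measure lebesgue (V - P)"
        using int_split[OF one Vm Vab Pm] lmeasure_integral[OF Vl] lmeasure_integral[OF VPl(1)]
          lmeasure_integral[OF VPl(2)] by simp
      have fVP: "f integrable_on (V \<inter> P)" "f integrable_on (V - P)"
        using ai_subset[OF f VPm(1) VPab(1)] ai_subset[OF f VPm(2) VPab(2)]
        by (auto simp: absolutely_integrable_on_def)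
      have cq: "(\<lambda>x. q) integrable_on (V \<inter> P)"
        using absolutely_integrable_on_const[OF VPl(1), of q] by (simp add: absolutely_integrable_on_def)
      have t1: "integral (V \<inter> P) f \<le> q * measure lebesgue (V \<inter> P)"
      proof -
        have "integral (V \<inter> P) f \<le> integral (V \<inter> P) (\<lambda>x. q)"
          using fVP(1) cq by (intro integral_le) (auto simp: P_def less_imp_le)
        also have "\<dots> = q * measure lebesgue (V \<inter> P)"
          using lmeasure_integral[OF VPl(1)] integral_mult_right[of "V \<inter> P" q "\<lambda>x. 1"] by simp
        finally show ?thesis .
      qed
      have mVP: "measure lebesgue (V - P) < \<delta>'"
      proof -
        have "V - P \<subseteq> U - P" using VU by (auto simp: U'_def)
        then have "measure lebesgue (V - P) \<le> measure lebesgue (U - P)"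
          using VPm(2) U(3) by (intro measure_mono_fmeasurable) auto
        then show ?thesis using mUP by linarith
      qed
      have t2: "integral (V - P) f \<le> \<eta>"
      proof -
        have "integral (V - P) f \<le> integral (V - P) (\<lambda>x. \<bar>f x\<bar>)"
          using fVP(2) ai_subset[OF fabs VPm(2) VPab(2)]
          by (intro integral_le) (auto simp: absolutely_integrable_on_def)
        also have "\<dots> \<le> \<eta>" using \<delta>M[OF VPm(2) VPab(2)] mVP \<delta>'_def by linarith
        finally show ?thesis .
      qed
      have t3: "\<bar>q\<bar> * \<delta>' \<le> e * (r - q) / 2"
      proof -
        have "\<bar>q\<bar> * \<delta>' \<le> \<bar>q\<bar> * (e * (r - q) / (2 * (\<bar>q\<bar> + 1)))"
          by (intro mult_left_mono) (auto simp: \<delta>'_def)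
        also have "\<dots> = (\<bar>q\<bar> / (\<bar>q\<bar> + 1)) * (e * (r - q) / 2)" by (simp add: field_simps)
        also have "\<dots> \<le> 1 * (e * (r - q) / 2)"
          using e qr by (intro mult_right_mono) auto
        finally show ?thesis by simp
      qed
      have t4: "- q * measure lebesgue (V - P) \<le> \<bar>q\<bar> * \<delta>'"
      proof -
        have "- q * measure lebesgue (V - P) \<le> \<bar>q\<bar> * measure lebesgue (V - P)"
          by (intro mult_right_mono) auto
        also have "\<dots> \<le> \<bar>q\<bar> * \<delta>'" using mVP by (intro mult_left_mono) auto
        finally show ?thesis .
      qed
      have "(r - q) * measure lebesgue V \<le> e * (r - q)"
        using r1 s1 s2 t1 t2 t3 t4 unfolding \<eta>_def by (simp add: algebra_simps)
      then have "measure lebesgue V \<le> e" using qr by (simp add: mult.commute)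
      then show ?thesis by (simp add: V_def)
    qed
    have Bfm: "B i \<in> fmeasurable lebesgue" if "i \<in> C" for i
      using lmeas_sub_Icc BK[OF that] by blast
    have UNf: "(\<Union>i\<in>C. B i) \<in> lmeasurable" and UNm: "measure lebesgue (\<Union>i\<in>C. B i) \<le> e"
      using fmeasurable_UN_bound[OF C(1) Bfm bound] measure_UN_bound[OF C(1) Bfm bound] by auto
    define N0 where "N0 = ?E - (\<Union>i\<in>C. B i)"
    have N0: "negligible N0" using Cneg by (simp add: N0_def B_def)
    have N0l: "N0 \<in> lmeasurable" "measure lebesgue N0 = 0"
      using N0 negligible_imp_measurable negligible_imp_measure0 by auto
    show "\<exists>T. ?E \<subseteq> T \<and> T \<in> lmeasurable \<and> measure lebesgue T \<le> e"
    proof (intro exI conjI)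
      show "?E \<subseteq> N0 \<union> (\<Union>i\<in>C. B i)" by (auto simp: N0_def)
      show "N0 \<union> (\<Union>i\<in>C. B i) \<in> lmeasurable" using N0l UNf by auto
      have "measure lebesgue (N0 \<union> (\<Union>i\<in>C. B i)) \<le> measure lebesgue N0 + measure lebesgue (\<Union>i\<in>C. B i)"
        using N0l UNf by (intro measure_Un_le) auto
      then show "measure lebesgue (N0 \<union> (\<Union>i\<in>C. B i)) \<le> e" using N0l UNm by simp
    qed
  qed
qed

lemma LD_real:
  fixes f :: "real \<Rightarrow> real"
  assumes f: "f absolutely_integrable_on {a..b}"
  shows "\<exists>N. negligible N \<and> (\<forall>x. a < x \<and> x < b \<and> x \<notin> N \<longrightarrow>
            ((\<lambda>y. integral {a..y} f) has_vector_derivative f x) (at x))"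
proof -
  define E where "E g q r = {x. a < x \<and> x < b \<and> g x < q \<and> (\<forall>d>0. \<exists>y. a \<le> y \<and> y \<le> b \<and> y \<noteq> x \<and>
            \<bar>y - x\<bar> < d \<and> r * \<bar>y - x\<bar> < integral {min x y..max x y} g)}" for g :: "real \<Rightarrow> real" and q r
  have fn: "(\<lambda>x. - f x) absolutely_integrable_on {a..b}"
    using integrable_minus[OF f[unfolded set_integrable_def]] unfolding set_integrable_def by simp
  define Q where "Q = {(q::real, r::real). q \<in> \<rat> \<and> r \<in> \<rat> \<and> q < r}"
  have cQ: "countable Q"
    by (rule countable_subset[of _ "\<rat> \<times> \<rat>"]) (auto simp: Q_def countable_rat)
  define N where "N = (\<Union>p\<in>Q. E f (fst p) (snd p) \<union> E (\<lambda>x. - f x) (fst p) (snd p))"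
  have negN: "negligible N" unfolding N_def
  proof (rule negligible_countable_Union)
    show "countable ((\<lambda>p. E f (fst p) (snd p) \<union> E (\<lambda>x. - f x) (fst p) (snd p)) ` Q)" using cQ by simp
    fix S assume "S \<in> (\<lambda>p. E f (fst p) (snd p) \<union> E (\<lambda>x. - f x) (fst p) (snd p)) ` Q"
    then obtain q r where qr: "q < r" and S: "S = E f q r \<union> E (\<lambda>x. - f x) q r"
      by (auto simp: Q_def)
    show "negligible S" unfolding S E_def
      using key_negl[OF f qr] key_negl[OF fn qr] by (intro negligible_Un) auto
  qed
  have bound: "\<exists>d>0. \<forall>y. a \<le> y \<and> y \<le> b \<and> y \<noteq> x \<and> \<bar>y - x\<bar> < d \<longrightarrow>
                  integral {min x y..max x y} g \<le> r * \<bar>y - x\<bar>"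
    if "x \<notin> E g q r" "a < x" "x < b" "g x < q" for g q r x
  proof -
    from that obtain d where "d > 0" and H: "\<forall>y. a \<le> y \<and> y \<le> b \<and> y \<noteq> x \<and> \<bar>y - x\<bar> < d \<longrightarrow>
        \<not> r * \<bar>y - x\<bar> < integral {min x y..max x y} g"
      unfolding E_def by blast
    then show ?thesis by (auto simp: not_less)
  qed
  show ?thesis
  proof (intro exI[of _ N] conjI negN allI impI)
    fix x assume x: "a < x \<and> x < b \<and> x \<notin> N"
    define F where "F y = integral {a..y} f" for y
    have fi: "f integrable_on {a..b}" using f by (simp add: absolutely_integrable_on_def)
    have quot: "(F y - F x) /\<^sub>R (y - x) = integral {min x y..max x y} f / \<bar>y - x\<bar>"
      if y: "a \<le> y" "y \<le> b" "y \<noteq> x" for y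
    proof (cases "x < y")
      case True
      have "integral {a..x} f + integral {x..y} f = integral {a..y} f"
        using x True y by (intro Henstock_Kurzweil_Integration.integral_combine[where a=a and c=x and b=y] integrable_on_subinterval[OF fi]) auto
      then show ?thesis using True by (simp add: F_def min_def max_def divide_inverse mult.commute)
    next
      case False
      then have yx: "y < x" using y by simp
      have "integral {a..y} f + integral {y..x} f = integral {a..x} f"
        using x yx y by (intro Henstock_Kurzweil_Integration.integral_combine[where a=a and c=y and b=x] integrable_on_subinterval[OF fi]) auto
      then have "F y - F x = - integral {y..x} f" by (simp add: F_def algebra_simps)
      then show ?thesis using yx
        by (simp add: min_def max_def divide_inverse) (simp add: field_simps)
    qed
    have "((\<lambda>y. (F y - F x) /\<^sub>R (y - x)) \<longlongrightarrow> f x) (at x)"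
      unfolding LIM_eq
    proof (intro allI impI)
      fix \<epsilon> :: real assume \<epsilon>: "\<epsilon> > 0"
      obtain q1 where q1: "q1 \<in> \<rat>" "f x < q1" "q1 < f x + \<epsilon>/4"
        using Rats_dense_in_real[of "f x" "f x + \<epsilon>/4"] \<epsilon> by auto
      obtain r1 where r1: "r1 \<in> \<rat>" "q1 < r1" "r1 < f x + \<epsilon>/2"
        using Rats_dense_in_real[of q1 "f x + \<epsilon>/2"] q1 by auto
      obtain q2 where q2: "q2 \<in> \<rat>" "- f x < q2" "q2 < - f x + \<epsilon>/4"
        using Rats_dense_in_real[of "- f x" "- f x + \<epsilon>/4"] \<epsilon> by auto
      obtain r2 where r2: "r2 \<in> \<rat>" "q2 < r2" "r2 < - f x + \<epsilon>/2"
        using Rats_dense_in_real[of q2 "- f x + \<epsilon>/2"] q2 by auto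
      have "(q1, r1) \<in> Q" "(q2, r2) \<in> Q" using q1 r1 q2 r2 by (auto simp: Q_def)
      then have nE: "x \<notin> E f q1 r1" "x \<notin> E (\<lambda>x. - f x) q2 r2" using x by (auto simp: N_def)
      obtain d1 where d1: "d1 > 0" "\<And>y. a \<le> y \<and> y \<le> b \<and> y \<noteq> x \<and> \<bar>y - x\<bar> < d1 \<Longrightarrow>
                  integral {min x y..max x y} f \<le> r1 * \<bar>y - x\<bar>"
        using bound[OF nE(1)] x q1 by blast
      obtain d2 where d2: "d2 > 0" "\<And>y. a \<le> y \<and> y \<le> b \<and> y \<noteq> x \<and> \<bar>y - x\<bar> < d2 \<Longrightarrow>
                  integral {min x y..max x y} (\<lambda>x. - f x) \<le> r2 * \<bar>y - x\<bar>"
        using bound[OF nE(2)] x q2 by blast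
      define s where "s = min (min d1 d2) (min (x - a) (b - x))"
      have spos: "s > 0" using d1 d2 x by (simp add: s_def)
      show "\<exists>s>0. \<forall>y. y \<noteq> x \<and> norm (y - x) < s \<longrightarrow> norm ((F y - F x) /\<^sub>R (y - x) - f x) < \<epsilon>"
      proof (intro exI[of _ s] conjI spos allI impI)
        fix y assume y: "y \<noteq> x \<and> norm (y - x) < s"
        have yab: "a \<le> y" "y \<le> b" using y by (auto simp: s_def)
        have ypos: "\<bar>y - x\<bar> > 0" using y by simp
        define J where "J = integral {min x y..max x y} f"
        have J1: "J \<le> r1 * \<bar>y - x\<bar>" unfolding J_def using d1(2)[of y] y yab by (auto simp: s_def)
        have J2: "- J \<le> r2 * \<bar>y - x\<bar>" unfolding J_def using d2(2)[of y] y yab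
          by (auto simp: s_def integral_neg)
        have Qv: "(F y - F x) /\<^sub>R (y - x) = J / \<bar>y - x\<bar>" using quot[OF yab] y by (simp add: J_def)
        have up: "J / \<bar>y - x\<bar> \<le> r1" using J1 ypos by (simp add: divide_simps)
        have lo: "- r2 \<le> J / \<bar>y - x\<bar>" using J2 ypos by (simp add: divide_simps)
        show "norm ((F y - F x) /\<^sub>R (y - x) - f x) < \<epsilon>"
          unfolding Qv using up lo r1 r2 by (simp add: abs_less_iff)
      qed
    qed
    then show "((\<lambda>y. integral {a..y} f) has_vector_derivative f x) (at x)"
      unfolding hvd_quot_iff F_def .
  qed
qed

lemma LD_vec:
  fixes f :: "real \<Rightarrow> 'b::euclidean_space"
  assumes f: "f absolutely_integrable_on {a..b}"
  shows "\<exists>N. negligible N \<and> (\<forall>x. a < x \<and> x < b \<and> x \<notin> N \<longrightarrow>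
            ((\<lambda>y. integral {a..y} f) has_vector_derivative f x) (at x))"
proof -
  have "\<forall>i\<in>Basis. \<exists>N. negligible N \<and> (\<forall>x. a < x \<and> x < b \<and> x \<notin> N \<longrightarrow>
      ((\<lambda>y. integral {a..y} (\<lambda>t. f t \<bullet> i)) has_vector_derivative (f x \<bullet> i)) (at x))"
    using LD_real[OF absolutely_integrable_component[OF f]] by blast
  then obtain Nf where Nf: "\<And>i. i \<in> Basis \<Longrightarrow> negligible (Nf i) \<and> (\<forall>x. a < x \<and> x < b \<and> x \<notin> Nf i \<longrightarrow>
      ((\<lambda>y. integral {a..y} (\<lambda>t. f t \<bullet> i)) has_vector_derivative (f x \<bullet> i)) (at x))"
    by metis
  define N where "N = (\<Union>i\<in>Basis. Nf i)"
  have negN: "negligible N" unfolding N_def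
    by (rule negligible_Union) (use Nf in auto)
  have fi: "f integrable_on {a..b}" using f by (simp add: absolutely_integrable_on_def)
  show ?thesis
  proof (intro exI[of _ N] conjI negN allI impI)
    fix x assume x: "a < x \<and> x < b \<and> x \<notin> N"
    have "((\<lambda>y. \<Sum>i\<in>Basis. integral {a..y} (\<lambda>t. f t \<bullet> i) *\<^sub>R i) has_vector_derivative
           (\<Sum>i\<in>Basis. (f x \<bullet> i) *\<^sub>R i)) (at x)"
    proof (rule has_vector_derivative_sum)
      fix i :: 'b assume i: "i \<in> Basis"
      then have "((\<lambda>y. integral {a..y} (\<lambda>t. f t \<bullet> i)) has_vector_derivative (f x \<bullet> i)) (at x)"
        using Nf[OF i] x by (auto simp: N_def)
      from bounded_linear.has_vector_derivative[OF bounded_linear_scaleR_left this]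
      show "((\<lambda>y. integral {a..y} (\<lambda>t. f t \<bullet> i) *\<^sub>R i) has_vector_derivative (f x \<bullet> i) *\<^sub>R i) (at x)" .
    qed
    then have D: "((\<lambda>y. \<Sum>i\<in>Basis. integral {a..y} (\<lambda>t. f t \<bullet> i) *\<^sub>R i) has_vector_derivative f x) (at x)"
      by (simp add: euclidean_representation)
    show "((\<lambda>y. integral {a..y} f) has_vector_derivative f x) (at x)"
    proof (rule has_vector_derivative_transform_within_open[OF D, of "{a<..<b}"])
      show "open {a<..<b}" by simp
      show "x \<in> {a<..<b}" using x by simp
      fix y assume y: "y \<in> {a<..<b}"
      have fy: "f integrable_on {a..y}" by (rule integrable_on_subinterval[OF fi]) (use y in auto)
      show "(\<Sum>i\<in>Basis. integral {a..y} (\<lambda>t. f t \<bullet> i) *\<^sub>R i) = integral {a..y} f"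
        by (simp add: integral_component_eq[OF fy] euclidean_representation)
    qed
  qed
qed



lemma telescope_zero:
  fixes D :: "real \<Rightarrow> 'c::real_normed_vector" and \<mu> :: "real \<Rightarrow> real"
  assumes ax: "a \<le> x"
    and mono: "\<And>s t. a \<le> s \<Longrightarrow> s \<le> t \<Longrightarrow> t \<le> x \<Longrightarrow> \<mu> s \<le> \<mu> t"
    and H: "\<And>\<epsilon>. \<epsilon> > 0 \<Longrightarrow> \<exists>\<delta>>0. \<forall>s t. a \<le> s \<and> s \<le> t \<and> t \<le> x \<and> t - s < \<delta> \<longrightarrow>
                 norm (D t - D s) \<le> \<epsilon> * (\<mu> t - \<mu> s)"
  shows "D x = D a"
proof -
  have le: "norm (D x - D a) \<le> \<epsilon> * (\<mu> x - \<mu> a)" if e: "\<epsilon> > 0" for \<epsilon>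
  proof -
    obtain \<delta> where \<delta>: "\<delta> > 0" and Hd: "\<And>s t. a \<le> s \<and> s \<le> t \<and> t \<le> x \<and> t - s < \<delta> \<Longrightarrow>
                 norm (D t - D s) \<le> \<epsilon> * (\<mu> t - \<mu> s)"
      using H[OF e] by blast
    obtain n :: nat where n: "(x - a) / \<delta> < real n" using reals_Archimedean2 by blast
    have npos: "n > 0" using n ax \<delta> by (cases n) (auto simp: divide_nonneg_nonneg leD)
    define t where "t k = a + real k * (x - a) / real n" for k
    have t0: "t 0 = a" and tn: "t n = x" using npos by (auto simp: t_def)
    have step: "t (Suc k) - t k = (x - a) / real n" for k using npos by (simp add: t_def field_simps)
    have stepd: "(x - a) / real n < \<delta>"
      using n npos \<delta> by (simp add: divide_simps mult.commute)
    have nn: "(x - a) / real n \<ge> 0" using ax by simp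
    have tmono: "a \<le> t k" "t k \<le> t (Suc k)" for k
    proof -
      show "a \<le> t k" using ax npos by (auto simp: t_def divide_nonneg_nonneg)
      show "t k \<le> t (Suc k)" using step[of k] nn by linarith
    qed
    have tle: "t k \<le> x" if "k \<le> n" for k
    proof -
      have "real k * (x - a) \<le> real n * (x - a)" using that ax by (intro mult_right_mono) auto
      then show ?thesis using npos by (simp add: t_def divide_simps algebra_simps)
    qed
    have "D x - D a = (\<Sum>k<n. D (t (Suc k)) - D (t k))"
      using sum_lessThan_telescope[of "\<lambda>k. D (t k)" n] by (simp add: t0 tn)
    then have "norm (D x - D a) \<le> (\<Sum>k<n. norm (D (t (Suc k)) - D (t k)))"
      by (simp add: norm_sum)
    also have "\<dots> \<le> (\<Sum>k<n. \<epsilon> * (\<mu> (t (Suc k)) - \<mu> (t k)))"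
    proof (rule sum_mono)
      fix k assume "k \<in> {..<n}"
      then have "Suc k \<le> n" by simp
      then show "norm (D (t (Suc k)) - D (t k)) \<le> \<epsilon> * (\<mu> (t (Suc k)) - \<mu> (t k))"
        using Hd[of "t k" "t (Suc k)"] tmono[of k] tle[of "Suc k"] step[of k] stepd by auto
    qed
    also have "\<dots> = \<epsilon> * (\<mu> x - \<mu> a)"
      using sum_lessThan_telescope[of "\<lambda>k. \<mu> (t k)" n] by (simp add: sum_distrib_left[symmetric] t0 tn)
    finally show ?thesis .
  qed
  have M: "\<mu> x - \<mu> a \<ge> 0" using mono[of a x] ax by simp
  show ?thesis
  proof (rule ccontr)
    assume "D x \<noteq> D a"
    then have c: "norm (D x - D a) > 0" by simp
    define \<epsilon> where "\<epsilon> = norm (D x - D a) / (2 * (\<mu> x - \<mu> a + 1))"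
    have e: "\<epsilon> > 0" using c M by (simp add: \<epsilon>_def)
    have "norm (D x - D a) \<le> \<epsilon> * (\<mu> x - \<mu> a)" by (rule le[OF e])
    also have "\<dots> < norm (D x - D a)"
    proof -
      have "\<epsilon> * (\<mu> x - \<mu> a) = norm (D x - D a) * ((\<mu> x - \<mu> a) / (2 * (\<mu> x - \<mu> a + 1)))"
        by (simp add: \<epsilon>_def)
      also have "\<dots> < norm (D x - D a) * 1"
        using c M by (intro mult_strict_left_mono) (auto simp: divide_simps)
      finally show ?thesis by simp
    qed
    finally show False by simp
  qed
qed
lemma bilinear_swap: "bilinear P \<Longrightarrow> bilinear (\<lambda>u v. P v u)"
  by (simp add: bilinear_def)

lemma prod_rule:
  fixes P :: "'a::euclidean_space \<Rightarrow> 'b::euclidean_space \<Rightarrow> 'c::euclidean_space"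
    and F f :: "real \<Rightarrow> 'a" and G g :: "real \<Rightarrow> 'b"
  assumes bl: "bounded_bilinear P" and ax: "a \<le> x"
    and f: "f absolutely_integrable_on {a..x}" and g: "g absolutely_integrable_on {a..x}"
    and F: "\<And>y. y \<in> {a..x} \<Longrightarrow> F y = F a + integral {a..y} f"
    and G: "\<And>y. y \<in> {a..x} \<Longrightarrow> G y = G a + integral {a..y} g"
  shows "(\<lambda>y. P (f y) (G y) + P (F y) (g y)) absolutely_integrable_on {a..x}"
    and "P (F x) (G x) - P (F a) (G a) = integral {a..x} (\<lambda>y. P (f y) (G y) + P (F y) (g y))"
proof -
  interpret P: bounded_bilinear P by (rule bl)
  have bil: "bilinear P" using bl bilinear_conv_bounded_bilinear by blast
  have fi: "f integrable_on {a..x}" using f by (simp add: absolutely_integrable_on_def)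
  have gi: "g integrable_on {a..x}" using g by (simp add: absolutely_integrable_on_def)
  have Fc: "continuous_on {a..x} F"
  proof (rule continuous_on_eq)
    show "continuous_on {a..x} (\<lambda>y. F a + integral {a..y} f)"
      by (intro continuous_intros indefinite_integral_continuous_1 fi)
  qed (metis F)
  have Gc: "continuous_on {a..x} G"
  proof (rule continuous_on_eq)
    show "continuous_on {a..x} (\<lambda>y. G a + integral {a..y} g)"
      by (intro continuous_intros indefinite_integral_continuous_1 gi)
  qed (metis G)
  have Fb: "bounded (F ` {a..x})" using Fc by (intro compact_imp_bounded compact_continuous_image) auto
  have Gb: "bounded (G ` {a..x})" using Gc by (intro compact_imp_bounded compact_continuous_image) auto
  have Fm: "F \<in> borel_measurable (lebesgue_on {a..x})"
    using Fc by (intro continuous_imp_measurable_on_sets_lebesgue) auto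
  have Gm: "G \<in> borel_measurable (lebesgue_on {a..x})"
    using Gc by (intro continuous_imp_measurable_on_sets_lebesgue) auto
  have p1: "(\<lambda>y. P (f y) (G y)) absolutely_integrable_on {a..x}"
    using absolutely_integrable_bounded_measurable_product[OF bilinear_swap[OF bil] Gm _ Gb f] by simp
  have p2: "(\<lambda>y. P (F y) (g y)) absolutely_integrable_on {a..x}"
    using absolutely_integrable_bounded_measurable_product[OF bil Fm _ Fb g] by simp
  show phi: "(\<lambda>y. P (f y) (G y) + P (F y) (g y)) absolutely_integrable_on {a..x}"
    using set_integral_add(1)[OF p1 p2] by simp
  define \<phi> where "\<phi> y = P (f y) (G y) + P (F y) (g y)" for y
  have phii: "\<phi> integrable_on {a..x}" using phi unfolding \<phi>_def[abs_def] by (simp add: absolutely_integrable_on_def)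
  define h where "h y = norm (f y) + norm (g y)" for y
  have hi: "h integrable_on {a..x}"
    using f g unfolding h_def[abs_def] by (simp add: absolutely_integrable_on_def integrable_add)
  define \<mu> where "\<mu> y = integral {a..y} h" for y
  define D where "D y = P (F y) (G y) - integral {a..y} \<phi>" for y
  have comb: "integral {a..t} k - integral {a..s} k = integral {s..t} k"
    if "k integrable_on {a..x}" "a \<le> s" "s \<le> t" "t \<le> x" for k :: "real \<Rightarrow> 'd::banach" and s t
  proof -
    have "integral {a..s} k + integral {s..t} k = integral {a..t} k"
      using that by (intro Henstock_Kurzweil_Integration.integral_combine[where a=a and c=s and b=t]
           integrable_on_subinterval[OF that(1)]) auto
    then show ?thesis by (simp add: algebra_simps)
  qed
  have sub: "k integrable_on {s..t}" if "k integrable_on {a..x}" "a \<le> s" "t \<le> x" for k :: "real \<Rightarrow> 'd::banach" and s t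
    by (rule integrable_on_subinterval[OF that(1)]) (use that in auto)
  have mono: "\<mu> s \<le> \<mu> t" if "a \<le> s" "s \<le> t" "t \<le> x" for s t
  proof -
    have "\<mu> t - \<mu> s = integral {s..t} h" using comb[OF hi that] by (simp add: \<mu>_def)
    moreover have "integral {s..t} h \<ge> 0"
      using sub[OF hi that(1,3)] by (intro integral_nonneg) (auto simp: h_def)
    ultimately show ?thesis by simp
  qed
  obtain K where K: "K > 0" "\<And>u v. norm (P u v) \<le> norm u * norm v * K"
    using P.pos_bounded by blast
  have Fu: "uniformly_continuous_on {a..x} F" using Fc by (intro compact_uniformly_continuous) auto
  have Gu: "uniformly_continuous_on {a..x} G" using Gc by (intro compact_uniformly_continuous) auto
  have H: "\<exists>\<delta>>0. \<forall>s t. a \<le> s \<and> s \<le> t \<and> t \<le> x \<and> t - s < \<delta> \<longrightarrow>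
                 norm (D t - D s) \<le> \<epsilon> * (\<mu> t - \<mu> s)" if e: "\<epsilon> > 0" for \<epsilon>
  proof -
    have eK: "\<epsilon> / K > 0" using e K by simp
    obtain d1 where d1: "d1 > 0" "\<And>y y'. y \<in> {a..x} \<Longrightarrow> y' \<in> {a..x} \<Longrightarrow> dist y' y < d1 \<Longrightarrow> dist (F y') (F y) < \<epsilon> / K"
      using Fu eK unfolding uniformly_continuous_on_def by blast
    obtain d2 where d2: "d2 > 0" "\<And>y y'. y \<in> {a..x} \<Longrightarrow> y' \<in> {a..x} \<Longrightarrow> dist y' y < d2 \<Longrightarrow> dist (G y') (G y) < \<epsilon> / K"
      using Gu eK unfolding uniformly_continuous_on_def by blast
    show ?thesis
    proof (intro exI[of _ "min d1 d2"] conjI allI impI)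
      show "min d1 d2 > 0" using d1 d2 by simp
      fix s t assume st: "a \<le> s \<and> s \<le> t \<and> t \<le> x \<and> t - s < min d1 d2"
      then have sa: "a \<le> s" "s \<le> t" "t \<le> x" by auto
      have fst: "f integrable_on {s..t}" "g integrable_on {s..t}" "\<phi> integrable_on {s..t}" "h integrable_on {s..t}"
        using sub[OF fi sa(1,3)] sub[OF gi sa(1,3)] sub[OF phii sa(1,3)] sub[OF hi sa(1,3)] by auto
      have Ft: "F t = F a + integral {a..t} f" by (rule F) (use sa in auto)
      have Fs: "F s = F a + integral {a..s} f" by (rule F) (use sa in auto)
      have Gt: "G t = G a + integral {a..t} g" by (rule G) (use sa in auto)
      have Gs: "G s = G a + integral {a..s} g" by (rule G) (use sa in auto)
      have Fts: "F t - F s = integral {s..t} f"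
        unfolding comb[OF fi sa, symmetric] by (subst Ft, subst Fs) simp
      have Gts: "G t - G s = integral {s..t} g"
        unfolding comb[OF gi sa, symmetric] by (subst Gt, subst Gs) simp
      have i1: "(\<lambda>y. P (f y) (G t)) integrable_on {s..t}"
        using integrable_linear[OF fst(1) P.bounded_linear_left[of "G t"]] by (simp add: o_def)
      have i2: "(\<lambda>y. P (F s) (g y)) integrable_on {s..t}"
        using integrable_linear[OF fst(2) P.bounded_linear_right[of "F s"]] by (simp add: o_def)
      have e1: "P (F t - F s) (G t) = integral {s..t} (\<lambda>y. P (f y) (G t))"
        unfolding Fts using integral_linear[OF fst(1) P.bounded_linear_left[of "G t"]] by (simp add: o_def)
      have e2: "P (F s) (G t - G s) = integral {s..t} (\<lambda>y. P (F s) (g y))"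
        unfolding Gts using integral_linear[OF fst(2) P.bounded_linear_right[of "F s"]] by (simp add: o_def)
      define chh where "chh y = (P (f y) (G t) + P (F s) (g y)) - \<phi> y" for y
      have chii: "chh integrable_on {s..t}" unfolding chh_def
        by (intro integrable_diff integrable_add i1 i2 fst(3))
      have Dts: "D t - D s = integral {s..t} chh"
      proof -
        have "P (F t) (G t) - P (F s) (G s) = P (F t - F s) (G t) + P (F s) (G t - G s)"
          by (simp add: P.diff_left P.diff_right)
        also have "\<dots> = integral {s..t} (\<lambda>y. P (f y) (G t) + P (F s) (g y))"
          using e1 e2 integral_add[OF i1 i2] by simp
        finally have "P (F t) (G t) - P (F s) (G s) = integral {s..t} (\<lambda>y. P (f y) (G t) + P (F s) (g y))" .
        moreover have "integral {a..t} \<phi> - integral {a..s} \<phi> = integral {s..t} \<phi>" by (rule comb[OF phii sa])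
        ultimately show ?thesis unfolding D_def chh_def
          using integral_diff[OF integrable_add[OF i1 i2] fst(3)] by (simp add: algebra_simps)
      qed
      have chib: "norm (chh y) \<le> \<epsilon> * h y" if y: "y \<in> {s..t}" for y
      proof -
        have ya: "y \<in> {a..x}" using y sa by auto
        have "chh y = P (f y) (G t - G y) + P (F s - F y) (g y)"
          by (simp add: chh_def \<phi>_def P.diff_left P.diff_right algebra_simps)
        then have "norm (chh y) \<le> norm (P (f y) (G t - G y)) + norm (P (F s - F y) (g y))"
          by (simp add: norm_triangle_ineq)
        also have "\<dots> \<le> norm (f y) * norm (G t - G y) * K + norm (F s - F y) * norm (g y) * K"
          by (intro add_mono K(2))
        also have "\<dots> \<le> norm (f y) * (\<epsilon> / K) * K + (\<epsilon> / K) * norm (g y) * K"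
        proof -
          have "dist (G t) (G y) < \<epsilon> / K" using d2(2)[of y t] ya sa y st by (auto simp: dist_real_def)
          moreover have "dist (F s) (F y) < \<epsilon> / K" using d1(2)[of y s] ya sa y st by (auto simp: dist_real_def)
          ultimately show ?thesis using K(1)
            by (intro add_mono mult_right_mono mult_left_mono) (auto simp: dist_norm less_imp_le)
        qed
        also have "\<dots> = \<epsilon> * h y" using K(1) by (simp add: h_def field_simps)
        finally show ?thesis .
      qed
      have "norm (D t - D s) \<le> integral {s..t} (\<lambda>y. \<epsilon> * h y)"
      proof -
        have hi': "(\<lambda>y. \<epsilon> * h y) integrable_on {s..t}" using integrable_cmul[OF fst(4), of \<epsilon>] by simp
        show ?thesis unfolding Dts by (rule integral_norm_bound_integral[OF chii hi' chib])
      qed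
      also have "\<dots> = \<epsilon> * (\<mu> t - \<mu> s)"
        using comb[OF hi sa] by (simp add: \<mu>_def integral_mult_right)
      finally show "norm (D t - D s) \<le> \<epsilon> * (\<mu> t - \<mu> s)" .
    qed
  qed
  have "D x = D a" by (rule telescope_zero[OF ax mono H]) auto
  then have "P (F x) (G x) - integral {a..x} \<phi> = P (F a) (G a)" by (simp add: D_def)
  moreover have "integral {a..x} \<phi> = integral {a..x} (\<lambda>y. P (f y) (G y) + P (F y) (g y))"
    by (simp add: \<phi>_def[abs_def])
  ultimately show "P (F x) (G x) - P (F a) (G a) = integral {a..x} (\<lambda>y. P (f y) (G y) + P (F y) (g y))"
    by (metis diff_eq_eq add.commute)
qed


lemma key_comm:
  fixes A S :: "complex^'n^'n" and P :: "complex^'m^'n" and J :: "complex^'m^'m"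
  assumes inv: "invertible S" and idn: "A ** S - S ** cadj A = P ** J ** cadj P"
  shows "cadj A ** matrix_inv S = matrix_inv S ** A - matrix_inv S ** P ** J ** cadj P ** matrix_inv S"
proof -
  define G where "G = matrix_inv S"
  have SG: "S ** G = mat 1" "G ** S = mat 1" using mi_both[OF inv] by (auto simp: G_def)
  have "G ** (A ** S - S ** cadj A) ** G = G ** (P ** J ** cadj P) ** G" by (simp add: idn)
  moreover have "G ** (A ** S - S ** cadj A) ** G = G ** A - cadj A ** G"
  proof -
    have "G ** (A ** S - S ** cadj A) ** G = G ** A ** S ** G - G ** S ** cadj A ** G"
      by (simp add: mm_diff_left mm_diff_right matrix_mul_assoc)
    also have "G ** A ** S ** G = G ** A" by (simp add: SG flip: matrix_mul_assoc)
    also have "G ** S ** cadj A ** G = cadj A ** G" by (simp add: SG)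
    finally show ?thesis .
  qed
  ultimately show ?thesis by (simp add: G_def matrix_mul_assoc algebra_simps)
qed

lemma final_alg:
  fixes J H1 H0 :: "complex^'m^'m" and A S E :: "complex^'n^'n" and P :: "complex^'m^'n"
    and w h :: "complex^'n"
  assumes J: "cadj J = - J" and H1: "cadj H1 = H1" and H0: "cadj H0 = H0"
    and inv: "invertible S" and herm: "cadj S = S"
    and idn: "A ** S - S ** cadj A = P ** J ** cadj P"
    and w: "w = E *v h"
  shows "J *v (cadj P *v (- (matrix_inv S ** (P ** J ** H1 ** cadj J ** cadj P) ** matrix_inv S) *v w)
            + cadj (- (A ** P ** J ** H1) - P ** J ** H0) *v (matrix_inv S *v w))
     = J *v (- (H1 *v (J *v (cadj P *v (matrix_inv S *v (- (A ** E) *v h)))))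
          + (H0 - cadj (J ** cadj P ** matrix_inv S ** P) ** H1 - H1 ** (J ** cadj P ** matrix_inv S ** P))
              *v (J *v (cadj P *v (matrix_inv S *v w))))"
proof -
  define G where "G = matrix_inv S"
  have cG: "cadj G = G" using cadj_inv[OF inv herm] by (simp add: G_def)
  have kc: "cadj A *v (G *v w) = G *v (A *v w) - G *v (P *v (J *v (cadj P *v (G *v w))))"
    using arg_cong[OF key_comm[OF inv idn], of "\<lambda>M. M *v w"]
    by (simp add: G_def matrix_vector_mult_diff_rdistrib flip: matrix_vector_mul_assoc)
  define z where "z = J *v (cadj P *v (G *v w))"
  have cP': "cadj (- (A ** P ** J ** H1) - P ** J ** H0) = H1 ** J ** cadj P ** cadj A + H0 ** J ** cadj P"
    by (simp add: cadj_diff cadj_uminus cadj_mult J H1 H0 mm_uminus_left mm_uminus_right matrix_mul_assoc)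
  have cX: "cadj (J ** cadj P ** G ** P) = - (cadj P ** G ** P ** J)"
    by (simp add: cadj_mult cadj_cadj J cG mm_uminus_right matrix_mul_assoc)
  have Aw: "(- (A ** E)) *v h = - (A *v w)"
    by (simp add: w mv_uminus_left matrix_vector_mul_assoc)
  have L1: "(- (G ** (P ** J ** H1 ** cadj J ** cadj P) ** G)) *v w = G *v (P *v (J *v (H1 *v z)))"
    by (simp add: z_def J mv_uminus_left mm_uminus_right mm_uminus_left vec.neg flip: matrix_vector_mul_assoc)
  have L2: "(H1 ** J ** cadj P ** cadj A + H0 ** J ** cadj P) *v (G *v w)
      = H1 *v (J *v (cadj P *v (G *v (A *v w)))) - H1 *v (J *v (cadj P *v (G *v (P *v z)))) + H0 *v z"
    by (simp add: z_def matrix_vector_mult_add_rdistrib kc vec.diff flip: matrix_vector_mul_assoc)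
  have R1: "- (H1 *v (J *v (cadj P *v (G *v (- (A ** E) *v h))))) = H1 *v (J *v (cadj P *v (G *v (A *v w))))"
    by (simp add: Aw vec.neg)
  have R2: "(H0 - (- (cadj P ** G ** P ** J)) ** H1 - H1 ** (J ** cadj P ** G ** P)) *v z
      = H0 *v z + cadj P *v (G *v (P *v (J *v (H1 *v z)))) - H1 *v (J *v (cadj P *v (G *v (P *v z))))"
    by (simp add: matrix_vector_mult_diff_rdistrib matrix_vector_mult_add_rdistrib mv_uminus_left mm_uminus_left flip: matrix_vector_mul_assoc)
  show ?thesis
    unfolding G_def[symmetric] cP' cX L1 L2 z_def[symmetric] R1 R2
    by (simp add: vec.add vec.diff algebra_simps)
qed

lemma ai_prod_left:
  fixes M :: "real \<Rightarrow> complex^'k^'n" and H :: "real \<Rightarrow> complex^'m^'k"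
  assumes "continuous_on {a..b} M" "H absolutely_integrable_on {a..b}"
  shows "(\<lambda>y. M y ** H y) absolutely_integrable_on {a..b}"
proof -
  have "bounded (M ` {a..b})" using assms(1) by (intro compact_imp_bounded compact_continuous_image) auto
  moreover have "M \<in> borel_measurable (lebesgue_on {a..b})"
    using assms(1) by (intro continuous_imp_measurable_on_sets_lebesgue) auto
  ultimately show ?thesis
    using absolutely_integrable_bounded_measurable_product[OF bilinear_mm _ _ _ assms(2)] by simp
qed

lemma ai_prod_right:
  fixes M :: "real \<Rightarrow> complex^'k^'n" and H :: "real \<Rightarrow> complex^'n^'m"
  assumes "continuous_on {a..b} M" "H absolutely_integrable_on {a..b}"
  shows "(\<lambda>y. H y ** M y) absolutely_integrable_on {a..b}"
proof -
  have "bounded (M ` {a..b})" using assms(1) by (intro compact_imp_bounded compact_continuous_image) auto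
  moreover have "M \<in> borel_measurable (lebesgue_on {a..b})"
    using assms(1) by (intro continuous_imp_measurable_on_sets_lebesgue) auto
  ultimately show ?thesis
    using absolutely_integrable_bounded_measurable_product[OF bilinear_swap[OF bilinear_mm] _ _ _ assms(2)] by simp
qed

lemma ai_uminus:
  fixes f :: "real \<Rightarrow> 'b::euclidean_space"
  shows "f absolutely_integrable_on S \<Longrightarrow> (\<lambda>x. - f x) absolutely_integrable_on S"
  using integrable_minus unfolding set_integrable_def by fastforce

lemma bb_PJ: "bounded_bilinear (\<lambda>(u::complex^'m^'n) (v::complex^'m^'n). u ** (J::complex^'m^'m) ** cadj v)"
proof -
  have "bilinear (\<lambda>(u::complex^'m^'n) (v::complex^'m^'n). u ** J ** cadj v)"
    unfolding bilinear_def linear_iff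
    by (simp add: mm_add_left matrix_add_ldistrib cadj_add cadj_scaleR mm_scaleR_right
        scalar_matrix_assoc[symmetric])
  then show ?thesis using bilinear_conv_bounded_bilinear by blast
qed

theorem proposition7p1:
  fixes l :: ereal
    and J :: "complex^'m^'m"
    and H1 H0 :: "real \<Rightarrow> complex^'m^'m"
    and A S0 :: "complex^'n^'n"
    and Pi0 :: "complex^'m^'n"
    and Pi :: "real \<Rightarrow> complex^'m^'n"
    and S :: "real \<Rightarrow> complex^'n^'n"
    and h :: "complex^'n"
  assumes l_pos: "0 < l"
    and J_skew: "cadj J = - J"
    and H1_herm: "\<And>x. 0 \<le> x \<Longrightarrow> ereal x < l \<Longrightarrow> cadj (H1 x) = H1 x"
    and H0_herm: "\<And>x. 0 \<le> x \<Longrightarrow> ereal x < l \<Longrightarrow> cadj (H0 x) = H0 x"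
    and H1_loc: "\<And>r. 0 \<le> r \<Longrightarrow> ereal r < l \<Longrightarrow> H1 absolutely_integrable_on {0..r}"
    and H0_loc: "\<And>r. 0 \<le> r \<Longrightarrow> ereal r < l \<Longrightarrow> H0 absolutely_integrable_on {0..r}"
    and S0_herm: "cadj S0 = S0"
    and identity: "A ** S0 - S0 ** cadj A = Pi0 ** J ** cadj Pi0"
    and Pi_ode: "\<And>x. 0 \<le> x \<Longrightarrow> ereal x < l \<Longrightarrow>
        ((\<lambda>y. - (A ** Pi y ** J ** H1 y) - Pi y ** J ** H0 y) has_integral (Pi x - Pi0)) {0..x}"
    and S_ode: "\<And>x. 0 \<le> x \<Longrightarrow> ereal x < l \<Longrightarrow>
        ((\<lambda>y. Pi y ** J ** H1 y ** cadj J ** cadj (Pi y)) has_integral (S x - S0)) {0..x}"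
  shows "AE x in lborel. 0 \<le> x \<and> ereal x < l \<and> invertible (S x) \<longrightarrow>
     (let z = (\<lambda>y t::real. J *v (cadj (Pi y) *v (matrix_inv (S y) *v (mexp ((- t) *\<^sub>R A) *v h))));
          X = J ** cadj (Pi x) ** matrix_inv (S x) ** Pi x;
          H0t = H0 x - cadj X ** H1 x - H1 x ** X
      in \<forall>t::real. \<exists>zx zt.
           ((\<lambda>y. z y t) has_vector_derivative zx) (at x) \<and>
           ((\<lambda>s. z x s) has_vector_derivative zt) (at t) \<and>
           zx = J *v (- (H1 x *v zt) + H0t *v z x t))"
proof -
  define \<Omega> where "\<Omega> = {x::real. 0 \<le> x \<and> ereal x < l}"
  define fP where "fP y = - (A ** Pi y ** J ** H1 y) - Pi y ** J ** H0 y" for y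
  define fS where "fS y = Pi y ** J ** H1 y ** cadj J ** cadj (Pi y)" for y
  have Pint: "(fP has_integral (Pi x - Pi0)) {0..x}" if "x \<in> \<Omega>" for x
    using Pi_ode[of x] that unfolding \<Omega>_def fP_def[abs_def] by auto
  have Sint: "(fS has_integral (S x - S0)) {0..x}" if "x \<in> \<Omega>" for x
    using S_ode[of x] that unfolding \<Omega>_def fS_def[abs_def] by auto
  have sub\<Omega>: "y \<in> \<Omega>" if "x \<in> \<Omega>" "y \<in> {0..x}" for x y
  proof -
    have "ereal y \<le> ereal x" using that(2) by simp
    moreover have "ereal x < l" using that(1) by (simp add: \<Omega>_def)
    ultimately have "ereal y < l" by (rule le_less_trans)
    then show ?thesis using that by (auto simp: \<Omega>_def)
  qed
  have O0: "0 \<in> \<Omega>" using l_pos by (simp add: \<Omega>_def zero_ereal_def)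
  have Pi00: "Pi 0 = Pi0" using integral_unique[OF Pint[OF O0]] by simp
  have S00: "S 0 = S0" using integral_unique[OF Sint[OF O0]] by simp
  have Prep: "Pi y = Pi0 + integral {0..y} fP" if "y \<in> \<Omega>" for y
    using integral_unique[OF Pint[OF that]] by simp
  have Srep: "S y = S0 + integral {0..y} fS" if "y \<in> \<Omega>" for y
    using integral_unique[OF Sint[OF that]] by simp
  have ai: "fP absolutely_integrable_on {0..r} \<and> fS absolutely_integrable_on {0..r}" if r: "r \<in> \<Omega>" for r
  proof -
    have Pc: "continuous_on {0..r} Pi"
    proof (rule continuous_on_eq)
      show "continuous_on {0..r} (\<lambda>y. Pi0 + integral {0..y} fP)"
        using Pint[OF r] by (intro continuous_intros indefinite_integral_continuous_1) auto
      show "\<And>y. y \<in> {0..r} \<Longrightarrow> Pi0 + integral {0..y} fP = Pi y"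
        using Prep sub\<Omega>[OF r] by metis
    qed
    have h1: "H1 absolutely_integrable_on {0..r}" and h0: "H0 absolutely_integrable_on {0..r}"
      using H1_loc H0_loc r by (auto simp: \<Omega>_def)
    have c1: "continuous_on {0..r} (\<lambda>y. A ** Pi y ** J)"
      by (intro bounded_bilinear.continuous_on[OF bb_mm] continuous_on_const Pc)
    have c2: "continuous_on {0..r} (\<lambda>y. Pi y ** J)"
      by (intro bounded_bilinear.continuous_on[OF bb_mm] continuous_on_const Pc)
    have c3: "continuous_on {0..r} (\<lambda>y. cadj J ** cadj (Pi y))"
      by (intro bounded_bilinear.continuous_on[OF bb_mm] continuous_on_const
            bounded_linear.continuous_on[OF bounded_linear_cadj] Pc)
    have "(\<lambda>y. - (A ** Pi y ** J ** H1 y) - Pi y ** J ** H0 y) absolutely_integrable_on {0..r}"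
      using set_integral_diff(1)[OF ai_uminus[OF ai_prod_left[OF c1 h1]] ai_prod_left[OF c2 h0]] by simp
    moreover have "(\<lambda>y. Pi y ** J ** H1 y ** (cadj J ** cadj (Pi y))) absolutely_integrable_on {0..r}"
      using ai_prod_right[OF c3 ai_prod_left[OF c2 h1]] by simp
    ultimately show ?thesis unfolding fP_def[abs_def] fS_def[abs_def] by (simp add: matrix_mul_assoc)
  qed
  have "\<exists>N. negligible N \<and> (r \<in> \<Omega> \<longrightarrow> (\<forall>x. 0 < x \<and> x < r \<and> x \<notin> N \<longrightarrow>
        ((\<lambda>y. integral {0..y} fP) has_vector_derivative fP x) (at x) \<and>
        ((\<lambda>y. integral {0..y} fS) has_vector_derivative fS x) (at x)))" for r
  proof (cases "r \<in> \<Omega>")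
    case True
    obtain N1 where N1: "negligible N1" "\<And>x. 0 < x \<and> x < r \<and> x \<notin> N1 \<Longrightarrow>
        ((\<lambda>y. integral {0..y} fP) has_vector_derivative fP x) (at x)"
      using LD_vec[where f=fP and a=0 and b=r] ai[OF True] by blast
    obtain N2 where N2: "negligible N2" "\<And>x. 0 < x \<and> x < r \<and> x \<notin> N2 \<Longrightarrow>
        ((\<lambda>y. integral {0..y} fS) has_vector_derivative fS x) (at x)"
      using LD_vec[where f=fS and a=0 and b=r] ai[OF True] by blast
    show ?thesis using N1 N2 by (intro exI[of _ "N1 \<union> N2"]) auto
  qed auto
  then obtain NN where NN: "\<And>r. negligible (NN r)" "\<And>r x. r \<in> \<Omega> \<Longrightarrow> 0 < x \<Longrightarrow> x < r \<Longrightarrow> x \<notin> NN r \<Longrightarrow>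
        ((\<lambda>y. integral {0..y} fP) has_vector_derivative fP x) (at x) \<and>
        ((\<lambda>y. integral {0..y} fS) has_vector_derivative fS x) (at x)"
    by metis
  define N where "N = {0} \<union> \<Union>(NN ` \<rat>)"
  have negN: "negligible N" unfolding N_def
    by (intro negligible_Un negligible_countable_Union) (auto simp: countable_rat NN(1))
  have AEN: "AE x in lborel. x \<notin> N"
  proof -
    have "N \<in> null_sets lebesgue" using negN negligible_iff_null_sets by blast
    then have "AE x in lebesgue. x \<notin> N" by (rule AE_not_in)
    then show ?thesis by (simp add: AE_completion_iff)
  qed
  show ?thesis
  proof (rule AE_mp[OF AEN], rule AE_I2, intro impI)
    fix x :: real
    assume xN: "x \<notin> N" and xc: "0 \<le> x \<and> ereal x < l \<and> invertible (S x)"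
    have xO: "x \<in> \<Omega>" using xc by (simp add: \<Omega>_def)
    have xpos: "x > 0" using xN xc by (auto simp: N_def)
    obtain y' where y': "ereal x < ereal y'" "ereal y' < l" using xc ereal_dense2 by blast
    obtain r where r: "r \<in> \<rat>" "x < r" "r < y'" using Rats_dense_in_real[of x y'] y' by auto
    have rO: "r \<in> \<Omega>"
    proof -
      have "ereal r < ereal y'" using r by simp
      then have "ereal r < l" using y'(2) by (rule less_trans)
      then show ?thesis using xc r by (auto simp: \<Omega>_def)
    qed
    have xNr: "x \<notin> NN r" using xN r(1) by (auto simp: N_def)
    have DI: "((\<lambda>y. integral {0..y} fP) has_vector_derivative fP x) (at x)"
         "((\<lambda>y. integral {0..y} fS) has_vector_derivative fS x) (at x)"
      using NN(2)[OF rO xpos r(2) xNr] by auto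
    have opn: "open {0<..<r}" "x \<in> {0<..<r}" using xpos r by auto
    have inO: "y \<in> \<Omega>" if "y \<in> {0<..<r}" for y using sub\<Omega>[OF rO, of y] that by auto
    have dPi: "(Pi has_vector_derivative fP x) (at x)"
    proof (rule has_vector_derivative_transform_within_open[OF _ opn])
      show "((\<lambda>y. Pi0 + integral {0..y} fP) has_vector_derivative fP x) (at x)"
        using DI(1) by (auto intro!: derivative_eq_intros)
      show "\<And>y. y \<in> {0<..<r} \<Longrightarrow> Pi0 + integral {0..y} fP = Pi y" using Prep inO by metis
    qed
    have dS: "(S has_vector_derivative fS x) (at x)"
    proof (rule has_vector_derivative_transform_within_open[OF _ opn])
      show "((\<lambda>y. S0 + integral {0..y} fS) has_vector_derivative fS x) (at x)"
        using DI(2) by (auto intro!: derivative_eq_intros)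
      show "\<And>y. y \<in> {0<..<r} \<Longrightarrow> S0 + integral {0..y} fS = S y" using Srep inO by metis
    qed
    have fS_herm: "cadj (fS y) = fS y" if "y \<in> {0..x}" for y
    proof -
      have "cadj (H1 y) = H1 y" using sub\<Omega>[OF xO that] H1_herm by (auto simp: \<Omega>_def)
      then show ?thesis by (simp add: fS_def cadj_mult cadj_cadj matrix_mul_assoc)
    qed
    have herm: "cadj (S x) = S x"
    proof -
      have "((cadj \<circ> fS) has_integral cadj (S x - S0)) {0..x}"
        by (rule has_integral_linear[OF Sint[OF xO] bounded_linear_cadj])
      then have "(fS has_integral cadj (S x - S0)) {0..x}"
        by (rule has_integral_eq[rotated]) (simp add: fS_herm)
      then have "cadj (S x - S0) = S x - S0" using has_integral_unique Sint[OF xO] by blast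
      then show ?thesis by (simp add: cadj_diff S0_herm)
    qed
    have idx: "A ** S x - S x ** cadj A = Pi x ** J ** cadj (Pi x)"
    proof -
      have PF: "Pi y = Pi 0 + integral {0..y} fP" if "y \<in> {0..x}" for y
        using Prep[OF sub\<Omega>[OF xO that]] Pi00 by simp
      have aix: "fP absolutely_integrable_on {0..x}" using ai[OF xO] by blast
      have pr: "Pi x ** J ** cadj (Pi x) - Pi 0 ** J ** cadj (Pi 0) =
          integral {0..x} (\<lambda>y. fP y ** J ** cadj (Pi y) + Pi y ** J ** cadj (fP y))"
      proof -
        have x0: "0 \<le> x" using xc by simp
        show ?thesis using prod_rule(2)[OF bb_PJ[of J] x0 aix aix PF PF] .
      qed
      have pw: "fP y ** J ** cadj (Pi y) + Pi y ** J ** cadj (fP y) = A ** fS y - fS y ** cadj A"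
        if "y \<in> {0..x}" for y
      proof -
        have h1: "cadj (H1 y) = H1 y" and h0: "cadj (H0 y) = H0 y"
          using sub\<Omega>[OF xO that] H1_herm H0_herm by (auto simp: \<Omega>_def)
        show ?thesis
          by (simp add: fP_def fS_def cadj_diff cadj_uminus cadj_mult J_skew h1 h0
              mm_diff_left mm_diff_right mm_add_left matrix_add_ldistrib mm_uminus_left mm_uminus_right
              matrix_mul_assoc algebra_simps)
      qed
      have "((\<lambda>y. A ** fS y - fS y ** cadj A) has_integral (A ** (S x - S0) - (S x - S0) ** cadj A)) {0..x}"
      proof (rule has_integral_diff)
        show "((\<lambda>y. A ** fS y) has_integral A ** (S x - S0)) {0..x}"
          using has_integral_linear[OF Sint[OF xO] bounded_bilinear.bounded_linear_right[OF bb_mm, of A]]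
          by (simp add: o_def)
        show "((\<lambda>y. fS y ** cadj A) has_integral (S x - S0) ** cadj A) {0..x}"
          using has_integral_linear[OF Sint[OF xO] bounded_bilinear.bounded_linear_left[OF bb_mm, of "cadj A"]]
          by (simp add: o_def)
      qed
      then have "((\<lambda>y. fP y ** J ** cadj (Pi y) + Pi y ** J ** cadj (fP y)) has_integral
                   (A ** (S x - S0) - (S x - S0) ** cadj A)) {0..x}"
        by (rule has_integral_eq[rotated]) (simp add: pw)
      note hi = this
      have "Pi x ** J ** cadj (Pi x) - Pi0 ** J ** cadj Pi0 = A ** (S x - S0) - (S x - S0) ** cadj A"
      proof -
        note iu = integral_unique[OF hi]
        show ?thesis using pr[unfolded Pi00] unfolding iu .
      qed
      then show ?thesis using identity by (simp add: mm_diff_left mm_diff_right algebra_simps)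
    qed
    have invS: "invertible (S x)" using xc by blast
    show "let z = (\<lambda>y t::real. J *v (cadj (Pi y) *v (matrix_inv (S y) *v (mexp ((- t) *\<^sub>R A) *v h))));
          X = J ** cadj (Pi x) ** matrix_inv (S x) ** Pi x;
          H0t = H0 x - cadj X ** H1 x - H1 x ** X
      in \<forall>t::real. \<exists>zx zt.
           ((\<lambda>y. z y t) has_vector_derivative zx) (at x) \<and>
           ((\<lambda>s. z x s) has_vector_derivative zt) (at t) \<and>
           zx = J *v (- (H1 x *v zt) + H0t *v z x t)"
      unfolding Let_def
    proof (intro allI)
      fix t :: real
      define E where "E = mexp ((- t) *\<^sub>R A)"
      define w where "w = E *v h"
      define G where "G = matrix_inv (S x)"
      have dinv: "((\<lambda>y. matrix_inv (S y)) has_vector_derivative - (G ** fS x ** G)) (at x)"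
        using inv_deriv[OF dS invS] by (simp add: G_def)
      have dv: "((\<lambda>y. matrix_inv (S y) *v w) has_vector_derivative (- (G ** fS x ** G)) *v w) (at x)"
        using bounded_linear.has_vector_derivative[OF bounded_bilinear.bounded_linear_left[OF bb_mv, of w] dinv] .
      have dcP: "((\<lambda>y. cadj (Pi y)) has_vector_derivative cadj (fP x)) (at x)"
        using bounded_linear.has_vector_derivative[OF bounded_linear_cadj dPi] .
      have dprod: "((\<lambda>y. cadj (Pi y) *v (matrix_inv (S y) *v w)) has_vector_derivative
          cadj (Pi x) *v ((- (G ** fS x ** G)) *v w) + cadj (fP x) *v (matrix_inv (S x) *v w)) (at x)"
        using bounded_bilinear.has_vector_derivative[OF bb_mv dcP dv] .
      have dzx: "((\<lambda>y. J *v (cadj (Pi y) *v (matrix_inv (S y) *v w))) has_vector_derivative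
          J *v (cadj (Pi x) *v ((- (G ** fS x ** G)) *v w) + cadj (fP x) *v (matrix_inv (S x) *v w))) (at x)"
        using bounded_linear.has_vector_derivative[OF matrix_vector_mul_bounded_linear dprod] .
      have dE: "((\<lambda>s. mexp ((- s) *\<^sub>R A)) has_vector_derivative - (A ** E)) (at t)"
        using mexp_deriv[of A t] by (simp add: E_def)
      have dzt: "((\<lambda>s. J *v (cadj (Pi x) *v (matrix_inv (S x) *v (mexp ((- s) *\<^sub>R A) *v h)))) has_vector_derivative
          J *v (cadj (Pi x) *v (matrix_inv (S x) *v ((- (A ** E)) *v h)))) (at t)"
      proof -
        have "bounded_linear (\<lambda>M::complex^'n^'n. J *v (cadj (Pi x) *v (matrix_inv (S x) *v (M *v h))))"
          by (intro bounded_linear_compose[OF matrix_vector_mul_bounded_linear]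
              bounded_bilinear.bounded_linear_left[OF bb_mv])
        from bounded_linear.has_vector_derivative[OF this dE] show ?thesis .
      qed
      have eq: "J *v (cadj (Pi x) *v ((- (G ** fS x ** G)) *v w) + cadj (fP x) *v (matrix_inv (S x) *v w)) =
          J *v (- (H1 x *v (J *v (cadj (Pi x) *v (matrix_inv (S x) *v ((- (A ** E)) *v h))))) +
             (H0 x - cadj (J ** cadj (Pi x) ** matrix_inv (S x) ** Pi x) ** H1 x -
              H1 x ** (J ** cadj (Pi x) ** matrix_inv (S x) ** Pi x)) *v
             (J *v (cadj (Pi x) *v (matrix_inv (S x) *v w))))"
        unfolding G_def fS_def fP_def
        by (rule final_alg[OF J_skew H1_herm[of x] H0_herm[of x] invS herm idx w_def]) (use xc in auto)
      show "\<exists>zx zt.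
           ((\<lambda>y. J *v (cadj (Pi y) *v (matrix_inv (S y) *v (mexp ((- t) *\<^sub>R A) *v h))))
              has_vector_derivative zx) (at x) \<and>
           ((\<lambda>s. J *v (cadj (Pi x) *v (matrix_inv (S x) *v (mexp ((- s) *\<^sub>R A) *v h))))
              has_vector_derivative zt) (at t) \<and>
           zx = J *v (- (H1 x *v zt) +
              (H0 x - cadj (J ** cadj (Pi x) ** matrix_inv (S x) ** Pi x) ** H1 x -
               H1 x ** (J ** cadj (Pi x) ** matrix_inv (S x) ** Pi x)) *v
              (J *v (cadj (Pi x) *v (matrix_inv (S x) *v (mexp ((- t) *\<^sub>R A) *v h)))))"
        using dzx dzt eq unfolding w_def E_def by blast
    qed
  qed
qed

end
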